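(* Consider the distributed detection model described in the context with no channel state information at the sensors, i.e. sensor gains $\boldsymbol{\alpha}=\sqrt{P/L}\,\mathbf{1}_L$, and Ricean channels with parameter $K\ge 0$. If the channels are zero-mean ($K=0$), then for every number of antennas $N\ge 1$ the error exponent $\mathcal{E}_{\rm NoCSIS}(N,0)$ equals zero, so the conditional error probability $P_{e|\mathbf{H}}(N)$ does not decrease exponentially in $L$ for any $N$. Moreover, the antenna gain $G_{\rm NoCSIS}(N,K):=\mathcal{E}_{\rm NoCSIS}(N,K)/\mathcal{E}_{\rm NoCSIS}(1,K)$ (defined for $K>0$) satisfies $\lim_{K\to 0}G_{\rm NoCSIS}(N,K)=N$.
   Context: Model: $L$ sensors observe $\Theta\in\{0,\theta\}$, $\theta>0$, with $\Theta=\theta$ (hypothesis $H_1$) having prior probability $p_1\in(0,1)$ and $\Theta=0$ ($H_0$) probability $p_0=1-p_1$. Sensor $l$ observes $x_l=\Theta+\eta_l$, where $\eta_l\sim\mathcal{CN}(0,\sigma_\eta^2)$ i.i.d., multiplies it by a complex gain $\alpha_l$ and transmits over a multiple-access channel to a fusion center (FC) with $N$ antennas. The received vector is $\mathbf{y}=\mathbf{H}\boldsymbol{\alpha}\Theta+\mathbf{H}\mathbf{D}(\boldsymbol{\alpha})\boldsymbol{\eta}+\boldsymbol{\nu}$, where $\mathbf{H}$ is the $N\times L$ channel matrix with i.i.d. entries $h_{nl}=\sqrt{K/(K+1)}+\frac{1}{\sqrt{K+1}}h^{\rm diff}_{nl}$, the $h^{\rm diff}_{nl}$ being i.i.d. zero-mean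 with $E|h^{\rm diff}_{nl}|^2=1$ (so $E|h_{nl}|^2=1$), $K\ge0$ is the Ricean (line-of-sight) parameter, $\mathbf{D}(\boldsymbol{\alpha})=\mathrm{diag}(\alpha_1,\dots,\alpha_L)$, $\boldsymbol{\eta}=(\eta_l)$, and $\boldsymbol{\nu}\sim\mathcal{CN}(\mathbf{0},\sigma_\nu^2\mathbf{I}_N)$ independent of $\boldsymbol\eta$. Let $\mathbf{R}(\boldsymbol{\alpha})=\sigma_\eta^2\mathbf{H}\mathbf{D}(\boldsymbol{\alpha})\mathbf{D}(\boldsymbol{\alpha})^H\mathbf{H}^H+\sigma_\nu^2\mathbf{I}_N$. The gains satisfy the power constraint $\sum_l|\alpha_l|^2\le P:=P_T/(p_1\theta^2+\sigma_\eta^2)$, where $P_T>0$ is the total average transmit power. The FC knows $\mathbf{H},\boldsymbol\alpha$ and uses the Bayesian optimal (likelihood ratio) test, whose conditional error probability is $P_{e|\mathbf{H}}(N)=p_0Q(\omega+\tau/\omega)+p_1Q(\omega-\tau/\omega)$ with $\omega=\theta\sqrt{\boldsymbol\alpha^H\mathbf{H}^H\mathbf{R}(\boldsymbol\alpha)^{-1}\mathbf{H}\boldsymbol\alpha/2}$, $\tau=\frac12\ln(p_0/p_1)$, and $Q$ the Gaussian tail function. The error exponent is $\mathcal{E}(N)=\lim_{L\to\infty}-\frac1L\log P_{e|\mathbf{H}}(N)$ (limit in probability), which equals $\lim_{L\to\infty}\frac{\theta^2}{8}\frac1L\boldsymbol\alpha^H\mathbf{H}^H\mathbf{R}(\boldsymbol\alpha)^{-1}\mathbf{H}\boldsymbol\alpha$.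 $\mathcal{E}_{\rm NoCSIS}(N,K)$ denotes this error exponent when $\boldsymbol\alpha=\sqrt{P/L}\,\mathbf{1}_L$ and the channels have Ricean parameter $K$. *)

theory Defs
  imports "HOL-Probability.Probability" "Jordan_Normal_Form.Gauss_Jordan_Elimination"
begin

definition ctrans :: "complex mat \<Rightarrow> complex mat" where
  "ctrans A = mat (dim_col A) (dim_row A) (\<lambda>(i,j). cnj (A $$ (j,i)))"

definition Dmat :: "complex vec \<Rightarrow> complex mat" where
  "Dmat a = mat (dim_vec a) (dim_vec a) (\<lambda>(i,j). if i = j then a $ i else 0)"

definition ricean :: "real \<Rightarrow> complex \<Rightarrow> complex" where
  "ricean K hdf = complex_of_real (sqrt (K / (K + 1))) + complex_of_real (1 / sqrt (K + 1)) * hdf"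

definition Hmat :: "nat \<Rightarrow> nat \<Rightarrow> real \<Rightarrow> (nat \<Rightarrow> nat \<Rightarrow> complex) \<Rightarrow> complex mat" where
  "Hmat N L K hdf = mat N L (\<lambda>(n,l). ricean K (hdf n l))"

definition Rmat :: "real \<Rightarrow> real \<Rightarrow> complex mat \<Rightarrow> complex vec \<Rightarrow> complex mat" where
  "Rmat s_eta2 s_nu2 H a =
     complex_of_real s_eta2 \<cdot>\<^sub>m (H * Dmat a * ctrans (Dmat a) * ctrans H)
     + complex_of_real s_nu2 \<cdot>\<^sub>m 1\<^sub>m (dim_row H)"

(* alpha^H H^H R(alpha)^{-1} H alpha  (a real number, since R is Hermitian positive definite) *)
definition quad_stat :: "real \<Rightarrow> real \<Rightarrow> complex mat \<Rightarrow> complex vec \<Rightarrow> real" where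
  "quad_stat s_eta2 s_nu2 H a =
     (let v = H *\<^sub>v a; Rinv = the (mat_inverse (Rmat s_eta2 s_nu2 H a))
      in Re (conjugate v \<bullet> (Rinv *\<^sub>v v)))"

(* the finite-L quantity whose limit (in probability) is the error exponent:
   theta^2/8 * (1/L) * alpha^H H^H R^{-1} H alpha *)
definition exp_stat :: "real \<Rightarrow> real \<Rightarrow> real \<Rightarrow> nat \<Rightarrow> complex mat \<Rightarrow> complex vec \<Rightarrow> real" where
  "exp_stat \<theta> s_eta2 s_nu2 L H a = \<theta>\<^sup>2 / 8 * (1 / real L) * quad_stat s_eta2 s_nu2 H a"

definition alpha_nocsis :: "real \<Rightarrow> nat \<Rightarrow> complex vec" where
  "alpha_nocsis P L = vec L (\<lambda>_. complex_of_real (sqrt (P / real L)))"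

definition conv_in_prob :: "'a measure \<Rightarrow> (nat \<Rightarrow> 'a \<Rightarrow> real) \<Rightarrow> real \<Rightarrow> bool" where
  "conv_in_prob M X c \<longleftrightarrow>
     (\<forall>\<epsilon>>0. ((\<lambda>L. measure M {\<omega> \<in> space M. \<bar>X L \<omega> - c\<bar> > \<epsilon>}) \<longlongrightarrow> 0) sequentially)"

end

theory Submission
  imports Defs "Jordan_Normal_Form.Determinant"
begin


lemma Hmat_dims[simp]: "dim_row (Hmat N L K f) = N" "dim_col (Hmat N L K f) = L"
  by (simp_all add: Hmat_def)
lemma Hmat_idx[simp]: "n < N \<Longrightarrow> l < L \<Longrightarrow> Hmat N L K f $$ (n,l) = ricean K (f n l)"
  by (simp add: Hmat_def)
lemma alpha_dim[simp]: "dim_vec (alpha_nocsis P L) = L" by (simp add: alpha_nocsis_def)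
lemma alpha_idx[simp]: "l < L \<Longrightarrow> alpha_nocsis P L $ l = complex_of_real (sqrt (P / real L))"
  by (simp add: alpha_nocsis_def)
lemma Dmat_dims[simp]: "dim_row (Dmat a) = dim_vec a" "dim_col (Dmat a) = dim_vec a"
  by (simp_all add: Dmat_def)
lemma ctrans_dims[simp]: "dim_row (ctrans A) = dim_col A" "dim_col (ctrans A) = dim_row A"
  by (simp_all add: ctrans_def)
lemma ctrans_idx[simp]: "i < dim_col A \<Longrightarrow> j < dim_row A \<Longrightarrow> ctrans A $$ (i,j) = cnj (A $$ (j,i))"
  by (simp add: ctrans_def)
lemma Dmat_idx[simp]: "i < dim_vec a \<Longrightarrow> j < dim_vec a \<Longrightarrow> Dmat a $$ (i,j) = (if i = j then a $ i else 0)"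
  by (simp add: Dmat_def)

lemma mult_idx: "i < dim_row A \<Longrightarrow> j < dim_col B \<Longrightarrow> dim_col A = dim_row B \<Longrightarrow> (A * B) $$ (i,j) = (\<Sum>k\<in>{0..<dim_col A}. A $$ (i,k) * B $$ (k,j))"
  by (simp add: scalar_prod_def)

lemma HD_idx: assumes "n < dim_row H" "l < dim_col H" "dim_vec a = dim_col H"
  shows "(H * Dmat a) $$ (n,l) = H $$ (n,l) * a $ l"
proof -
  have "(H * Dmat a) $$ (n,l) = (\<Sum>j\<in>{0..<dim_col H}. H $$ (n,j) * (if j = l then a $ l else 0))"
    using assms by (subst mult_idx) (auto intro!: sum.cong)
  also have "\<dots> = H $$ (n,l) * a $ l"
    using assms by (simp add: if_distrib cong: if_cong)
  finally show ?thesis .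
qed

lemma HDD_idx: assumes "n < dim_row H" "l < dim_col H" "dim_vec a = dim_col H"
  shows "(H * Dmat a * ctrans (Dmat a)) $$ (n,l) = H $$ (n,l) * a $ l * cnj (a $ l)"
proof -
  have "(H * Dmat a * ctrans (Dmat a)) $$ (n,l) = (\<Sum>j\<in>{0..<dim_col H}. (H * Dmat a) $$ (n,j) * ctrans (Dmat a) $$ (j,l))"
    using assms by (subst mult_idx) auto
  also have "\<dots> = (\<Sum>j\<in>{0..<dim_col H}. (H $$ (n,j) * a $ j) * (if l = j then cnj (a $ l) else 0))"
    apply (rule sum.cong[OF refl])
    subgoal for j using assms by (subst HD_idx) auto
    done
  also have "\<dots> = H $$ (n,l) * a $ l * cnj (a $ l)"
    using assms by (simp add: if_distrib cong: if_cong)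
  finally show ?thesis .
qed

lemma R_idx: assumes "n < dim_row H" "n' < dim_row H" "dim_vec a = dim_col H"
  shows "Rmat s1 s2 H a $$ (n,n') = complex_of_real s1 * (\<Sum>l\<in>{0..<dim_col H}. H $$ (n,l) * a $ l * cnj (a $ l) * cnj (H $$ (n',l)))
     + (if n = n' then complex_of_real s2 else 0)"
proof -
  have "(H * Dmat a * ctrans (Dmat a) * ctrans H) $$ (n,n') = (\<Sum>l\<in>{0..<dim_col H}. (H * Dmat a * ctrans (Dmat a)) $$ (n,l) * ctrans H $$ (l,n'))"
    using assms by (subst mult_idx) auto
  also have "\<dots> = (\<Sum>l\<in>{0..<dim_col H}. H $$ (n,l) * a $ l * cnj (a $ l) * cnj (H $$ (n',l)))"
    apply (rule sum.cong[OF refl])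
    subgoal for j using assms by (subst HDD_idx) auto
    done
  finally have X: "(H * Dmat a * ctrans (Dmat a) * ctrans H) $$ (n,n') = (\<Sum>l\<in>{0..<dim_col H}. H $$ (n,l) * a $ l * cnj (a $ l) * cnj (H $$ (n',l)))" .
  define Mx where "Mx = H * Dmat a * ctrans (Dmat a) * ctrans H"
  have d: "dim_row Mx = dim_row H" "dim_col Mx = dim_row H"
    by (simp_all add: Mx_def)
  have X': "Mx $$ (n,n') = (\<Sum>l\<in>{0..<dim_col H}. H $$ (n,l) * a $ l * cnj (a $ l) * cnj (H $$ (n',l)))"
    using X by (simp add: Mx_def)
  show ?thesis unfolding Rmat_def Mx_def[symmetric]
    using assms d X' by simp
qed

lemma Rmat_carrier: "Rmat s1 s2 H a \<in> carrier_mat (dim_row H) (dim_row H)"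
  unfolding Rmat_def carrier_mat_def by simp


lemma cs_bound:
  fixes u w :: "nat \<Rightarrow> complex"
  shows "cmod (\<Sum>n\<in>A. cnj (u n) * w n) \<le> L2_set (\<lambda>n. cmod (u n)) A * L2_set (\<lambda>n. cmod (w n)) A"
proof -
  have "cmod (\<Sum>n\<in>A. cnj (u n) * w n) \<le> (\<Sum>n\<in>A. cmod (cnj (u n) * w n))"
    by (rule norm_sum)
  also have "\<dots> = (\<Sum>n\<in>A. \<bar>cmod (u n)\<bar> * \<bar>cmod (w n)\<bar>)"
    by (simp add: norm_mult)
  also have "\<dots> \<le> L2_set (\<lambda>n. cmod (u n)) A * L2_set (\<lambda>n. cmod (w n)) A"
    by (rule L2_set_mult_ineq)
  finally show ?thesis .
qed

lemma L2_le_sum_cmod: "L2_set (\<lambda>n. cmod (u n)) A \<le> (\<Sum>n\<in>A. cmod (u n))"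
  by (rule L2_set_le_sum) auto

lemma L2_sq: "finite A \<Longrightarrow> (L2_set (\<lambda>n. cmod (u n)) A)\<^sup>2 = (\<Sum>n\<in>A. (cmod (u n))\<^sup>2)"
  unfolding L2_set_def by (simp add: sum_nonneg)

lemma core_bound:
  fixes N :: nat and R :: "nat \<Rightarrow> nat \<Rightarrow> complex" and u z :: "nat \<Rightarrow> complex"
    and b \<alpha> \<gamma> \<mu> \<beta> \<delta> :: real
  assumes b: "b > 0"
    and posdef: "\<And>y. b * (\<Sum>n\<in>{0..<N}. (cmod (y n))\<^sup>2) \<le> Re (\<Sum>n\<in>{0..<N}. cnj (y n) * (\<Sum>j\<in>{0..<N}. R n j * y j))"
    and sol: "\<And>n. n < N \<Longrightarrow> (\<Sum>j\<in>{0..<N}. R n j * z j) = u n"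
    and beta: "(\<alpha> * N + \<gamma>) * \<beta> = \<mu>"
    and delta: "\<delta> = (\<Sum>n\<in>{0..<N}. cmod (u n - \<mu>)) + (\<Sum>n\<in>{0..<N}. \<Sum>j\<in>{0..<N}. cmod (R n j - (\<alpha> + (if n = j then \<gamma> else 0))))"
  shows "\<bar>Re (\<Sum>n\<in>{0..<N}. cnj (u n) * z n) - \<mu> * \<beta> * N\<bar> \<le> \<delta> * \<bar>\<beta>\<bar> + (N * \<bar>\<mu>\<bar> + \<delta>) * ((1 + \<bar>\<beta>\<bar>) * \<delta>) / b"
proof -
  define A where "A = {0..<N}"
  have finA: "finite A" by (simp add: A_def)
  define R0 where "R0 (n::nat) (j::nat) = complex_of_real (\<alpha> + (if n = j then \<gamma> else 0))" for n j
  define w where "w n = z n - complex_of_real \<beta>" for n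
  define r where "r n = (\<Sum>j\<in>A. R n j * w j)" for n
  define \<delta>1 where "\<delta>1 = (\<Sum>n\<in>A. cmod (u n - \<mu>))"
  define \<delta>2 where "\<delta>2 = (\<Sum>n\<in>A. \<Sum>j\<in>A. cmod (R n j - R0 n j))"
  have d12: "\<delta> = \<delta>1 + \<delta>2" unfolding delta \<delta>1_def \<delta>2_def A_def R0_def by simp
  have d1: "\<delta>1 \<ge> 0" "\<delta>2 \<ge> 0" unfolding \<delta>1_def \<delta>2_def by (auto intro!: sum_nonneg)
  have R0sum: "(\<Sum>j\<in>A. R0 n j * \<beta>) = \<mu>" if "n \<in> A" for n
  proof -
    have "(\<Sum>j\<in>A. R0 n j * \<beta>) = (\<Sum>j\<in>A. complex_of_real (\<alpha> * \<beta>) + (if n = j then complex_of_real (\<gamma> * \<beta>) else 0))"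
      unfolding R0_def by (intro sum.cong) (auto simp: distrib_right)
    also have "\<dots> = of_real (N * \<alpha> * \<beta> + \<gamma> * \<beta>)"
      using that by (simp add: sum.distrib A_def)
    also have "\<dots> = \<mu>" using beta by (simp add: algebra_simps)
    finally show ?thesis .
  qed
  have r_eq: "r n = (u n - \<mu>) - (\<Sum>j\<in>A. (R n j - R0 n j) * \<beta>)" if "n \<in> A" for n
  proof -
    have "r n = (\<Sum>j\<in>A. R n j * z j) - (\<Sum>j\<in>A. R n j * \<beta>)"
      unfolding r_def w_def by (simp add: sum_subtractf right_diff_distrib)
    also have "\<dots> = u n - (\<Sum>j\<in>A. R n j * \<beta>)" using sol that by (simp add: A_def)
    also have "(\<Sum>j\<in>A. R n j * \<beta>) = (\<Sum>j\<in>A. (R n j - R0 n j) * \<beta>) + (\<Sum>j\<in>A. R0 n j * \<beta>)"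
      by (simp add: sum.distrib[symmetric] algebra_simps)
    finally show ?thesis using R0sum[OF that] by simp
  qed
  have r_bound: "(\<Sum>n\<in>A. cmod (r n)) \<le> (1 + \<bar>\<beta>\<bar>) * \<delta>"
  proof -
    have "(\<Sum>n\<in>A. cmod (r n)) \<le> (\<Sum>n\<in>A. cmod (u n - \<mu>) + \<bar>\<beta>\<bar> * (\<Sum>j\<in>A. cmod (R n j - R0 n j)))"
    proof (intro sum_mono)
      fix n assume n: "n \<in> A"
      have "cmod (r n) \<le> cmod (u n - \<mu>) + cmod (\<Sum>j\<in>A. (R n j - R0 n j) * \<beta>)"
        unfolding r_eq[OF n] by (rule norm_triangle_ineq4)
      also have "cmod (\<Sum>j\<in>A. (R n j - R0 n j) * \<beta>) \<le> (\<Sum>j\<in>A. cmod ((R n j - R0 n j) * \<beta>))"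
        by (rule norm_sum)
      also have "\<dots> = \<bar>\<beta>\<bar> * (\<Sum>j\<in>A. cmod (R n j - R0 n j))"
        by (simp add: norm_mult sum_distrib_left mult.commute)
      finally show "cmod (r n) \<le> cmod (u n - \<mu>) + \<bar>\<beta>\<bar> * (\<Sum>j\<in>A. cmod (R n j - R0 n j))" by simp
    qed
    also have "\<dots> = \<delta>1 + \<bar>\<beta>\<bar> * \<delta>2"
      by (simp add: sum.distrib sum_distrib_left \<delta>1_def \<delta>2_def)
    also have "\<dots> \<le> (1 + \<bar>\<beta>\<bar>) * \<delta>"
      using d1 unfolding d12 by (simp add: algebra_simps)
    finally show ?thesis .
  qed
  define nw where "nw = L2_set (\<lambda>n. cmod (w n)) A"
  define nr where "nr = L2_set (\<lambda>n. cmod (r n)) A"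
  define nu where "nu = L2_set (\<lambda>n. cmod (u n)) A"
  have nw_bound: "b * nw \<le> nr"
  proof -
    have "b * nw\<^sup>2 \<le> Re (\<Sum>n\<in>A. cnj (w n) * r n)"
      using posdef[of w] L2_sq[OF finA, of w] unfolding nw_def r_def A_def by (simp only:)
    also have "\<dots> \<le> cmod (\<Sum>n\<in>A. cnj (w n) * r n)" by (rule complex_Re_le_cmod)
    also have "\<dots> \<le> nw * nr" unfolding nw_def nr_def by (rule cs_bound)
    finally have *: "b * nw\<^sup>2 \<le> nw * nr" .
    show ?thesis
    proof (cases "nw = 0")
      case True then show ?thesis by (simp add: nr_def)
    next
      case False
      then have "nw > 0" using L2_set_nonneg[of "\<lambda>n. cmod (w n)" A] unfolding nw_def by linarith
      with * show ?thesis by (simp add: power2_eq_square)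
    qed
  qed
  have nu_bound: "nu \<le> N * \<bar>\<mu>\<bar> + \<delta>"
  proof -
    have "nu \<le> (\<Sum>n\<in>A. cmod (u n))" unfolding nu_def by (rule L2_le_sum_cmod)
    also have "\<dots> \<le> (\<Sum>n\<in>A. \<bar>\<mu>\<bar> + cmod (u n - \<mu>))"
    proof (intro sum_mono)
      fix n show "cmod (u n) \<le> \<bar>\<mu>\<bar> + cmod (u n - \<mu>)"
        using norm_triangle_ineq[of "complex_of_real \<mu>" "u n - \<mu>"] by simp
    qed
    also have "\<dots> = N * \<bar>\<mu>\<bar> + \<delta>1" by (simp add: sum.distrib \<delta>1_def A_def)
    finally show ?thesis using d1 d12 by simp
  qed
  have nr_bound: "nr \<le> (1 + \<bar>\<beta>\<bar>) * \<delta>"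
    using L2_le_sum_cmod[of r A] r_bound by (simp add: nr_def)
  have q_split: "(\<Sum>n\<in>A. cnj (u n) * z n) = (\<Sum>n\<in>A. cnj (u n) * \<beta>) + (\<Sum>n\<in>A. cnj (u n) * w n)"
    unfolding w_def by (simp add: sum.distrib[symmetric] algebra_simps)
  have part1: "\<bar>Re (\<Sum>n\<in>A. cnj (u n) * \<beta>) - \<mu> * \<beta> * N\<bar> \<le> \<delta> * \<bar>\<beta>\<bar>"
  proof -
    have "Re (\<Sum>n\<in>A. cnj (u n) * \<beta>) - \<mu> * \<beta> * N = \<beta> * (\<Sum>n\<in>A. Re (u n - \<mu>))"
      by (simp add: Re_sum sum_distrib_left sum_subtractf A_def algebra_simps)
    also have "\<bar>\<dots>\<bar> \<le> \<bar>\<beta>\<bar> * (\<Sum>n\<in>A. cmod (u n - \<mu>))"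
      unfolding abs_mult
      by (intro mult_left_mono order.trans[OF sum_abs] sum_mono abs_Re_le_cmod) auto
    also have "\<dots> \<le> \<delta> * \<bar>\<beta>\<bar>" using d1 d12 unfolding \<delta>1_def[symmetric]
      by (simp add: algebra_simps)
    finally show ?thesis .
  qed
  have part2: "\<bar>Re (\<Sum>n\<in>A. cnj (u n) * w n)\<bar> \<le> (N * \<bar>\<mu>\<bar> + \<delta>) * ((1 + \<bar>\<beta>\<bar>) * \<delta>) / b"
  proof -
    have "\<bar>Re (\<Sum>n\<in>A. cnj (u n) * w n)\<bar> \<le> cmod (\<Sum>n\<in>A. cnj (u n) * w n)" by (rule abs_Re_le_cmod)
    also have "\<dots> \<le> nu * nw" unfolding nu_def nw_def by (rule cs_bound)
    also have "\<dots> \<le> nu * (nr / b)"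
      using nw_bound b by (intro mult_left_mono) (auto simp: field_simps nu_def)
    also have "\<dots> \<le> (N * \<bar>\<mu>\<bar> + \<delta>) * ((1 + \<bar>\<beta>\<bar>) * \<delta> / b)"
      using nu_bound nr_bound b d1 d12 by (intro mult_mono divide_right_mono) (auto simp: nu_def nr_def)
    finally show ?thesis by simp
  qed
  show ?thesis
    using part1 part2 q_split unfolding A_def[symmetric] by (simp add: Re_sum[symmetric])
qed


lemma mv_idx: "i < dim_row A \<Longrightarrow> dim_col A = dim_vec v \<Longrightarrow> (A *\<^sub>v v) $ i = (\<Sum>j\<in>{0..<dim_vec v}. A $$ (i,j) * v $ j)"
  by (simp add: scalar_prod_def)

definition Rf :: "real \<Rightarrow> real \<Rightarrow> real \<Rightarrow> nat \<Rightarrow> (nat \<Rightarrow> nat \<Rightarrow> complex) \<Rightarrow> nat \<Rightarrow> nat \<Rightarrow> complex" where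
  "Rf s1 s2 c L h n j = complex_of_real s1 * (complex_of_real c * (\<Sum>l\<in>{0..<L}. h n l * cnj (h j l))) + (if n = j then complex_of_real s2 else 0)"

lemma Rf_posdef:
  assumes "s1 \<ge> 0" "c \<ge> 0"
  shows "s2 * (\<Sum>n\<in>{0..<N}. (cmod (y n))\<^sup>2) \<le> Re (\<Sum>n\<in>{0..<N}. cnj (y n) * (\<Sum>j\<in>{0..<N}. Rf s1 s2 c L h n j * y j))"
proof -
  define g where "g l = (\<Sum>n\<in>{0..<N}. cnj (y n) * h n l)" for l
  have e: "(\<Sum>n\<in>{0..<N}. cnj (y n) * (\<Sum>j\<in>{0..<N}. Rf s1 s2 c L h n j * y j))
     = complex_of_real (s1 * c) * (\<Sum>l\<in>{0..<L}. g l * cnj (g l)) + complex_of_real s2 * (\<Sum>n\<in>{0..<N}. cnj (y n) * y n)"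
  proof -
    have pw: "cnj (y n) * (Rf s1 s2 c L h n j * y j) = complex_of_real (s1 * c) * (\<Sum>l\<in>{0..<L}. cnj (y n) * h n l * (cnj (h j l) * y j))
          + (if n = j then complex_of_real s2 * (cnj (y n) * y n) else 0)" for n j
        by (cases "n = j") (simp_all add: Rf_def algebra_simps sum_distrib_left sum_distrib_right)
    have "(\<Sum>n\<in>{0..<N}. cnj (y n) * (\<Sum>j\<in>{0..<N}. Rf s1 s2 c L h n j * y j))
       = (\<Sum>n\<in>{0..<N}. \<Sum>j\<in>{0..<N}. cnj (y n) * (Rf s1 s2 c L h n j * y j))"
      by (simp add: sum_distrib_left)
    also have "\<dots> = (\<Sum>n\<in>{0..<N}. \<Sum>j\<in>{0..<N}. complex_of_real (s1 * c) * (\<Sum>l\<in>{0..<L}. cnj (y n) * h n l * (cnj (h j l) * y j))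
          + (if n = j then complex_of_real s2 * (cnj (y n) * y n) else 0))"
      by (intro sum.cong refl) (rule pw)
    also have "\<dots> = complex_of_real (s1 * c) * (\<Sum>n\<in>{0..<N}. \<Sum>j\<in>{0..<N}. \<Sum>l\<in>{0..<L}. cnj (y n) * h n l * (cnj (h j l) * y j))
          + complex_of_real s2 * (\<Sum>n\<in>{0..<N}. cnj (y n) * y n)"
      by (simp add: sum.distrib sum_distrib_left)
    also have "(\<Sum>n\<in>{0..<N}. \<Sum>j\<in>{0..<N}. \<Sum>l\<in>{0..<L}. cnj (y n) * h n l * (cnj (h j l) * y j))
       = (\<Sum>l\<in>{0..<L}. g l * cnj (g l))"
      unfolding g_def
      by (simp add: sum_distrib_left sum_distrib_right cnj_sum mult.commute sum.swap[of _ "{0..<L}"])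
    finally show ?thesis .
  qed
  have "Re (\<Sum>l\<in>{0..<L}. g l * cnj (g l)) \<ge> 0"
    by (simp add: Re_sum sum_nonneg)
  moreover have "Re (\<Sum>n\<in>{0..<N}. cnj (y n) * y n) = (\<Sum>n\<in>{0..<N}. (cmod (y n))\<^sup>2)"
    by (simp add: Re_sum mult.commute[of "cnj _"] complex_norm_square[symmetric] del: of_real_power)
  ultimately show ?thesis unfolding e using assms
    by (simp add: mult_nonneg_nonneg)
qed
lemma link:
  assumes L: "0 < L" and P: "P \<ge> 0" and s1: "s1 \<ge> 0" and s2: "s2 > 0"
  shows "\<exists>Z. (\<forall>n<N. (\<Sum>j\<in>{0..<N}. Rf s1 s2 (P / L) L (\<lambda>n l. ricean K (f n l)) n j * Z j)
              = complex_of_real (sqrt P / L) * (\<Sum>l\<in>{0..<L}. ricean K (f n l)))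
         \<and> quad_stat s1 s2 (Hmat N L K f) (alpha_nocsis P L) / L
           = Re (\<Sum>n\<in>{0..<N}. cnj (complex_of_real (sqrt P / L) * (\<Sum>l\<in>{0..<L}. ricean K (f n l))) * Z n)"
proof -
  define h where "h n l = ricean K (f n l)" for n l
  define H where "H = Hmat N L K f"
  define a where "a = alpha_nocsis P L"
  define R where "R = Rmat s1 s2 H a"
  have Rc: "R \<in> carrier_mat N N" using Rmat_carrier[of s1 s2 H a] by (simp add: R_def H_def)
  have aa: "a $ l * cnj (a $ l) = complex_of_real (P / L)" if "l < L" for l
  proof -
    have "a $ l * cnj (a $ l) = complex_of_real ((sqrt (P / L))\<^sup>2)"
      using that by (simp add: a_def power2_eq_square of_real_mult[symmetric] del: of_real_mult)
    also have "\<dots> = complex_of_real (P / L)" using P by simp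
    finally show ?thesis .
  qed
  have Ridx: "R $$ (n,j) = Rf s1 s2 (P / L) L h n j" if "n < N" "j < N" for n j
  proof -
    have "R $$ (n,j) = complex_of_real s1 * (\<Sum>l\<in>{0..<L}. H $$ (n,l) * a $ l * cnj (a $ l) * cnj (H $$ (j,l)))
       + (if n = j then complex_of_real s2 else 0)"
      unfolding R_def using that by (subst R_idx) (auto simp: H_def a_def)
    also have "(\<Sum>l\<in>{0..<L}. H $$ (n,l) * a $ l * cnj (a $ l) * cnj (H $$ (j,l)))
       = (\<Sum>l\<in>{0..<L}. complex_of_real (P / L) * (h n l * cnj (h j l)))"
    proof (intro sum.cong refl)
      fix l assume "l \<in> {0..<L}"
      then have l: "l < L" by simp
      have "H $$ (n,l) * a $ l * cnj (a $ l) * cnj (H $$ (j,l)) = H $$ (n,l) * (a $ l * cnj (a $ l)) * cnj (H $$ (j,l))"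
        by (simp add: mult.assoc)
      also have "\<dots> = complex_of_real (P / L) * (h n l * cnj (h j l))"
        using l that by (simp only: aa) (simp add: H_def h_def)
      finally show "H $$ (n,l) * a $ l * cnj (a $ l) * cnj (H $$ (j,l)) = complex_of_real (P / L) * (h n l * cnj (h j l))" .
    qed
    finally show ?thesis by (simp add: Rf_def sum_distrib_left)
  qed
  have Rv: "(R *\<^sub>v x) $ n = (\<Sum>j\<in>{0..<N}. Rf s1 s2 (P / L) L h n j * x $ j)" if "n < N" "x \<in> carrier_vec N" for n x
    using that Rc by (subst mv_idx) (auto intro!: sum.cong simp: Ridx)
  have det: "Determinant.det R \<noteq> 0"
  proof
    assume "Determinant.det R = 0"
    then obtain x where x: "x \<in> carrier_vec N" "x \<noteq> 0\<^sub>v N" "R *\<^sub>v x = 0\<^sub>v N"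
      using det_0_iff_vec_prod_zero[OF Rc] by auto
    have "s2 * (\<Sum>n\<in>{0..<N}. (cmod (x $ n))\<^sup>2) \<le> Re (\<Sum>n\<in>{0..<N}. cnj (x $ n) * (\<Sum>j\<in>{0..<N}. Rf s1 s2 (P / L) L h n j * x $ j))"
      by (rule Rf_posdef) (use s1 P in auto)
    also have "\<dots> = 0"
    proof -
      have "(\<Sum>j\<in>{0..<N}. Rf s1 s2 (P / L) L h n j * x $ j) = 0" if "n \<in> {0..<N}" for n
        using Rv[of n x] x that by simp
      then show ?thesis by simp
    qed
    finally have "(\<Sum>n\<in>{0..<N}. (cmod (x $ n))\<^sup>2) \<le> 0" using s2
      by (simp add: mult_le_0_iff sum_nonneg) 
    moreover have "(\<Sum>n\<in>{0..<N}. (cmod (x $ n))\<^sup>2) \<ge> 0" by (rule sum_nonneg) simp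
    ultimately have "(\<Sum>n\<in>{0..<N}. (cmod (x $ n))\<^sup>2) = 0" by linarith
    then have "\<forall>n\<in>{0..<N}. (cmod (x $ n))\<^sup>2 = 0"
      by (subst sum_nonneg_eq_0_iff[symmetric]) auto
    then have "x = 0\<^sub>v N" using x(1) by (intro eq_vecI) auto
    with x(2) show False by simp
  qed
  obtain B where B: "mat_inverse R = Some B"
  proof (cases "mat_inverse R")
    case None
    have "R \<notin> Units (ring_mat TYPE(complex) N ())" by (rule mat_inverse(1)[OF Rc None])
    moreover have "R \<in> Units (ring_mat TYPE(complex) N ())" by (rule det_non_zero_imp_unit[OF Rc det])
    ultimately show ?thesis by blast
  qed
  from mat_inverse(2)[OF Rc B] have RB: "R * B = 1\<^sub>m N" and Bc: "B \<in> carrier_mat N N" by auto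
  define v where "v = H *\<^sub>v a"
  have vc: "v \<in> carrier_vec N" unfolding v_def carrier_vec_def H_def by (simp only: dim_mult_mat_vec Hmat_dims mem_Collect_eq)
  have vidx: "v $ n = complex_of_real (sqrt (P / L)) * (\<Sum>l\<in>{0..<L}. h n l)" if "n < N" for n
  proof -
    have "v $ n = (\<Sum>j\<in>{0..<L}. H $$ (n,j) * a $ j)"
      using that unfolding v_def by (subst mv_idx) (simp_all add: H_def a_def)
    also have "\<dots> = (\<Sum>j\<in>{0..<L}. complex_of_real (sqrt (P / L)) * h n j)"
      using that by (intro sum.cong refl) (simp add: H_def a_def h_def mult.commute)
    finally show ?thesis by (simp add: sum_distrib_left)
  qed
  define z where "z = B *\<^sub>v v"
  have zc: "z \<in> carrier_vec N" unfolding z_def carrier_vec_def using carrier_matD(1)[OF Bc]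
    by (simp only: dim_mult_mat_vec mem_Collect_eq)
  have Rz: "R *\<^sub>v z = v"
  proof -
    have "R *\<^sub>v z = (R * B) *\<^sub>v v" unfolding z_def by (rule assoc_mult_mat_vec[symmetric, OF Rc Bc vc])
    also have "\<dots> = v" unfolding RB by (rule one_mult_mat_vec[OF vc])
    finally show ?thesis .
  qed
  have sp: "conjugate v \<bullet> z = (\<Sum>n\<in>{0..<N}. cnj (v $ n) * z $ n)"
    unfolding scalar_prod_def using zc vc by (intro sum.cong) auto
  have q: "quad_stat s1 s2 H a = Re (\<Sum>n\<in>{0..<N}. cnj (v $ n) * z $ n)"
  proof -
    have "quad_stat s1 s2 H a = Re (conjugate v \<bullet> z)"
      unfolding quad_stat_def Let_def R_def[symmetric] B v_def[symmetric] z_def[symmetric] option.sel ..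
    then show ?thesis unfolding sp .
  qed
  define Z where "Z n = z $ n / complex_of_real (sqrt L)" for n
  have sL: "sqrt (real L) > 0" using L by simp
  have c1: "sqrt (P / L) / sqrt L = sqrt P / L"
    using L by (simp add: real_sqrt_divide)
  show ?thesis
  proof (intro exI conjI allI impI)
    fix n assume n: "n < N"
    have "(\<Sum>j\<in>{0..<N}. Rf s1 s2 (P / L) L h n j * Z j) = (\<Sum>j\<in>{0..<N}. Rf s1 s2 (P / L) L h n j * z $ j) / sqrt L"
      by (simp add: Z_def sum_divide_distrib)
    also have "\<dots> = v $ n / sqrt L" using Rv[OF n zc] Rz by simp
    also have "\<dots> = complex_of_real (sqrt P / L) * (\<Sum>l\<in>{0..<L}. h n l)"
      using vidx[OF n] c1[symmetric] by simp
    finally show "(\<Sum>j\<in>{0..<N}. Rf s1 s2 (P / L) L (\<lambda>n l. ricean K (f n l)) n j * Z j)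
              = complex_of_real (sqrt P / L) * (\<Sum>l\<in>{0..<L}. ricean K (f n l))"
      by (simp add: h_def[abs_def])
  next
    have "(\<Sum>n\<in>{0..<N}. cnj (complex_of_real (sqrt P / L) * (\<Sum>l\<in>{0..<L}. h n l)) * Z n)
      = (\<Sum>n\<in>{0..<N}. cnj (v $ n) * z $ n) / L"
    proof -
      have "cnj (complex_of_real (sqrt P / L) * (\<Sum>l\<in>{0..<L}. h n l)) * Z n = cnj (v $ n) * z $ n / L"
        if "n < N" for n
      proof -
        have "cnj (complex_of_real (sqrt P / L) * (\<Sum>l\<in>{0..<L}. h n l)) * Z n
           = cnj (v $ n / sqrt L) * (z $ n / sqrt L)"
          using vidx[OF that] c1[symmetric] by (simp add: Z_def)
        also have "\<dots> = cnj (v $ n) * z $ n / (complex_of_real (sqrt L) * complex_of_real (sqrt L))"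
          by simp
        also have "complex_of_real (sqrt L) * complex_of_real (sqrt L) = L"
          by (simp only: of_real_mult[symmetric]) simp
        finally show ?thesis .
      qed
      then have "(\<Sum>n\<in>{0..<N}. cnj (complex_of_real (sqrt P / L) * (\<Sum>l\<in>{0..<L}. h n l)) * Z n)
        = (\<Sum>n\<in>{0..<N}. cnj (v $ n) * z $ n / L)" by (intro sum.cong refl) auto
      then show ?thesis by (simp add: sum_divide_distrib)
    qed
    then show "quad_stat s1 s2 (Hmat N L K f) (alpha_nocsis P L) / L
           = Re (\<Sum>n\<in>{0..<N}. cnj (complex_of_real (sqrt P / L) * (\<Sum>l\<in>{0..<L}. ricean K (f n l))) * Z n)"
      using q by (simp add: H_def a_def h_def[abs_def] Re_divide_of_real)
  qed
qed


definition cip0 :: "'a measure \<Rightarrow> (nat \<Rightarrow> 'a \<Rightarrow> real) \<Rightarrow> bool" where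
  "cip0 M X \<longleftrightarrow> (\<forall>L. X L \<in> borel_measurable M) \<and>
     (\<forall>\<eta>>0. ((\<lambda>L. measure M {\<omega> \<in> space M. X L \<omega> > \<eta>}) \<longlongrightarrow> 0) sequentially)"

context prob_space begin

lemma tendsto0_le:
  fixes f g :: "nat \<Rightarrow> real"
  assumes "\<And>L. 0 \<le> f L" "eventually (\<lambda>L. f L \<le> g L) sequentially" "(g \<longlongrightarrow> 0) sequentially"
  shows "(f \<longlongrightarrow> 0) sequentially"
  by (rule tendsto_sandwich[of "\<lambda>_. 0" _ _ g]) (use assms in auto)

lemma cip0_add:
  assumes "cip0 M X" "cip0 M Y"
  shows "cip0 M (\<lambda>L \<omega>. X L \<omega> + Y L \<omega>)"
  unfolding cip0_def
proof (intro conjI allI impI)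
  fix L
  have [measurable]: "X L \<in> borel_measurable M" "Y L \<in> borel_measurable M" using assms by (auto simp: cip0_def)
  show "(\<lambda>\<omega>. X L \<omega> + Y L \<omega>) \<in> borel_measurable M" by measurable
next
  fix \<eta> :: real assume \<eta>: "\<eta> > 0"
  have mX[measurable]: "X L \<in> borel_measurable M" and mY[measurable]: "Y L \<in> borel_measurable M" for L
    using assms by (auto simp: cip0_def)
  have tX: "((\<lambda>L. measure M {\<omega> \<in> space M. X L \<omega> > \<eta>/2}) \<longlongrightarrow> 0) sequentially"
    and tY: "((\<lambda>L. measure M {\<omega> \<in> space M. Y L \<omega> > \<eta>/2}) \<longlongrightarrow> 0) sequentially"
    using assms \<eta> unfolding cip0_def by (meson half_gt_zero)+
  show "((\<lambda>L. measure M {\<omega> \<in> space M. X L \<omega> + Y L \<omega> > \<eta>}) \<longlongrightarrow> 0) sequentially"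
  proof (rule tendsto0_le)
    show "\<forall>\<^sub>F L in sequentially. measure M {\<omega> \<in> space M. X L \<omega> + Y L \<omega> > \<eta>}
       \<le> measure M {\<omega> \<in> space M. X L \<omega> > \<eta>/2} + measure M {\<omega> \<in> space M. Y L \<omega> > \<eta>/2}"
    proof (intro always_eventually allI)
      fix L
      have "measure M {\<omega> \<in> space M. X L \<omega> + Y L \<omega> > \<eta>}
          \<le> measure M ({\<omega> \<in> space M. X L \<omega> > \<eta>/2} \<union> {\<omega> \<in> space M. Y L \<omega> > \<eta>/2})"
        by (intro finite_measure_mono) auto
      also have "\<dots> \<le> measure M {\<omega> \<in> space M. X L \<omega> > \<eta>/2} + measure M {\<omega> \<in> space M. Y L \<omega> > \<eta>/2}"
        by (intro measure_Un_le) auto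
      finally show "measure M {\<omega> \<in> space M. X L \<omega> + Y L \<omega> > \<eta>}
       \<le> measure M {\<omega> \<in> space M. X L \<omega> > \<eta>/2} + measure M {\<omega> \<in> space M. Y L \<omega> > \<eta>/2}" .
    qed
    show "((\<lambda>L. measure M {\<omega> \<in> space M. X L \<omega> > \<eta>/2} + measure M {\<omega> \<in> space M. Y L \<omega> > \<eta>/2}) \<longlongrightarrow> 0) sequentially"
      using tendsto_add[OF tX tY] by simp
  qed simp
qed

lemma cip0_zero: "cip0 M (\<lambda>L \<omega>. 0)"
  unfolding cip0_def by auto

lemma cip0_sum:
  assumes "finite I" "\<And>i. i \<in> I \<Longrightarrow> cip0 M (X i)"
  shows "cip0 M (\<lambda>L \<omega>. \<Sum>i\<in>I. X i L \<omega>)"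
  using assms by (induction I rule: finite_induct) (auto intro: cip0_add cip0_zero)

lemma cip0_mono:
  assumes "cip0 M X" "\<And>L. Y L \<in> borel_measurable M" "\<And>L \<omega>. \<omega> \<in> space M \<Longrightarrow> Y L \<omega> \<le> X L \<omega>"
  shows "cip0 M Y"
  unfolding cip0_def
proof (intro conjI allI impI)
  fix L show "Y L \<in> borel_measurable M" by fact
next
  fix \<eta> :: real assume \<eta>: "\<eta> > 0"
  have [measurable]: "X L \<in> borel_measurable M" for L using assms by (auto simp: cip0_def)
  show "((\<lambda>L. measure M {\<omega> \<in> space M. Y L \<omega> > \<eta>}) \<longlongrightarrow> 0) sequentially"
  proof (rule tendsto0_le)
    show "\<forall>\<^sub>F L in sequentially. measure M {\<omega> \<in> space M. Y L \<omega> > \<eta>} \<le> measure M {\<omega> \<in> space M. X L \<omega> > \<eta>}"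
    proof (intro always_eventually allI finite_measure_mono)
      fix L show "{\<omega> \<in> space M. Y L \<omega> > \<eta>} \<subseteq> {\<omega> \<in> space M. X L \<omega> > \<eta>}"
        using assms(3) by (auto intro: order.strict_trans2)
      show "{\<omega> \<in> space M. X L \<omega> > \<eta>} \<in> events" by measurable
    qed
    show "((\<lambda>L. measure M {\<omega> \<in> space M. X L \<omega> > \<eta>}) \<longlongrightarrow> 0) sequentially"
      using assms \<eta> by (auto simp: cip0_def)
  qed simp
qed

lemma cip0_cmult:
  assumes "cip0 M X" "c \<ge> 0"
  shows "cip0 M (\<lambda>L \<omega>. c * X L \<omega>)"
proof (cases "c = 0")
  case True then show ?thesis using cip0_zero by simp
next
  case False
  then have c: "c > 0" using assms by simp
  show ?thesis unfolding cip0_def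
  proof (intro conjI allI impI)
    fix L
    have [measurable]: "X L \<in> borel_measurable M" using assms by (auto simp: cip0_def)
    show "(\<lambda>\<omega>. c * X L \<omega>) \<in> borel_measurable M" by measurable
  next
    fix \<eta> :: real assume \<eta>: "\<eta> > 0"
    have "{\<omega> \<in> space M. c * X L \<omega> > \<eta>} = {\<omega> \<in> space M. X L \<omega> > \<eta> / c}" for L
      using c by (auto simp: field_simps)
    then show "((\<lambda>L. measure M {\<omega> \<in> space M. c * X L \<omega> > \<eta>}) \<longlongrightarrow> 0) sequentially"
      using assms \<eta> c by (auto simp: cip0_def)
  qed
qed


lemma lln:
  fixes X :: "nat \<Rightarrow> 'a \<Rightarrow> real"
  assumes rv[measurable]: "\<And>l. X l \<in> borel_measurable M"
    and sq: "\<And>l. integrable M (\<lambda>\<omega>. (X l \<omega>)\<^sup>2)"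
    and mean: "\<And>l. expectation (X l) = \<mu>"
    and var: "\<And>l. expectation (\<lambda>\<omega>. (X l \<omega>)\<^sup>2) \<le> C"
    and ind: "\<And>l k. l \<noteq> k \<Longrightarrow> indep_var borel (X l) borel (X k)"
  shows "cip0 M (\<lambda>L \<omega>. \<bar>(\<Sum>l<L. X l \<omega>) / L - \<mu>\<bar>)"
  unfolding cip0_def
proof (intro conjI allI impI)
  fix L show "(\<lambda>\<omega>. \<bar>(\<Sum>l<L. X l \<omega>) / L - \<mu>\<bar>) \<in> borel_measurable M" by measurable
next
  fix \<eta> :: real assume \<eta>: "\<eta> > 0"
  define D where "D l \<omega> = X l \<omega> - \<mu>" for l \<omega>
  have [measurable]: "D l \<in> borel_measurable M" for l unfolding D_def by measurable
  have intX: "integrable M (X l)" for l by (rule square_integrable_imp_integrable[OF rv sq])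
  have intD: "integrable M (D l)" for l unfolding D_def using intX by auto
  have ED: "expectation (D l) = 0" for l unfolding D_def using intX mean by (simp add: prob_space)
  have indD: "indep_var borel (D l) borel (D k)" if "l \<noteq> k" for l k
    using indep_var_compose[OF ind[OF that], of "\<lambda>x. x - \<mu>" borel "\<lambda>x. x - \<mu>" borel]
    by (simp add: o_def D_def[abs_def])
  have prodD: "integrable M (\<lambda>\<omega>. D l \<omega> * D k \<omega>) \<and> expectation (\<lambda>\<omega>. D l \<omega> * D k \<omega>) \<le> (if l = k then C else 0)" for l k
  proof (cases "l = k")
    case True
    have eq: "(\<lambda>\<omega>. D l \<omega> * D l \<omega>) = (\<lambda>\<omega>. (X l \<omega>)\<^sup>2 - 2 * \<mu> * X l \<omega> + \<mu>\<^sup>2)"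
      by (auto simp: D_def power2_eq_square algebra_simps)
    have i: "integrable M (\<lambda>\<omega>. (X l \<omega>)\<^sup>2 - 2 * \<mu> * X l \<omega> + \<mu>\<^sup>2)"
      using sq intX by auto
    have "expectation (\<lambda>\<omega>. (X l \<omega>)\<^sup>2 - 2 * \<mu> * X l \<omega> + \<mu>\<^sup>2) = expectation (\<lambda>\<omega>. (X l \<omega>)\<^sup>2) - 2 * \<mu> * \<mu> + \<mu>\<^sup>2"
      using sq intX mean by (simp add: prob_space)
    also have "\<dots> \<le> C" using var[of l] by (simp add: power2_eq_square) (smt (verit) zero_le_square)
    finally show ?thesis using True eq i by simp
  next
    case False
    show ?thesis using False indep_var_integrable[OF indD[OF False] intD intD]
      indep_var_lebesgue_integral[OF indD[OF False] intD intD] ED by simp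
  qed
  have bound: "measure M {\<omega> \<in> space M. \<bar>(\<Sum>l<L. X l \<omega>) / L - \<mu>\<bar> > \<eta>} \<le> C / \<eta>\<^sup>2 * inverse (real L)" if L: "L > 0" for L
  proof -
    define Y where "Y \<omega> = (\<Sum>l<L. D l \<omega>)" for \<omega>
    have [measurable]: "Y \<in> borel_measurable M" unfolding Y_def by measurable
    have Ysq: "(Y \<omega>)\<^sup>2 = (\<Sum>l<L. \<Sum>k<L. D l \<omega> * D k \<omega>)" for \<omega>
      unfolding Y_def power2_eq_square by (simp add: sum_product)
    have intY: "integrable M (\<lambda>\<omega>. (Y \<omega>)\<^sup>2)"
      unfolding Ysq using prodD by auto
    have EY: "expectation (\<lambda>\<omega>. (Y \<omega>)\<^sup>2) \<le> L * C"
    proof -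
      have "expectation (\<lambda>\<omega>. (Y \<omega>)\<^sup>2) = (\<Sum>l<L. \<Sum>k<L. expectation (\<lambda>\<omega>. D l \<omega> * D k \<omega>))"
        unfolding Ysq using prodD by (simp add: Bochner_Integration.integral_sum)
      also have "\<dots> \<le> (\<Sum>l<L. \<Sum>k<L. (if l = k then C else 0))"
        using prodD by (intro sum_mono) auto
      also have "\<dots> = L * C" by simp
      finally show ?thesis .
    qed
    have Lpos: "real L > 0" using L by simp
    have "measure M {\<omega> \<in> space M. \<bar>(\<Sum>l<L. X l \<omega>) / L - \<mu>\<bar> > \<eta>} \<le> measure M {\<omega> \<in> space M. (Y \<omega>)\<^sup>2 \<ge> (L * \<eta>)\<^sup>2}"
    proof (intro finite_measure_mono)
      show "{\<omega> \<in> space M. (Y \<omega>)\<^sup>2 \<ge> (L * \<eta>)\<^sup>2} \<in> events" by measurable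
      show "{\<omega> \<in> space M. \<bar>(\<Sum>l<L. X l \<omega>) / L - \<mu>\<bar> > \<eta>} \<subseteq> {\<omega> \<in> space M. (Y \<omega>)\<^sup>2 \<ge> (L * \<eta>)\<^sup>2}"
      proof safe
        fix \<omega> assume "\<omega> \<in> space M" "\<bar>(\<Sum>l<L. X l \<omega>) / L - \<mu>\<bar> > \<eta>"
        moreover have "(\<Sum>l<L. X l \<omega>) / L - \<mu> = Y \<omega> / L"
          using Lpos by (simp add: Y_def D_def sum_subtractf field_simps)
        ultimately have "\<bar>Y \<omega>\<bar> > L * \<eta>" using Lpos by (simp add: abs_divide field_simps)
        then show "(Y \<omega>)\<^sup>2 \<ge> (L * \<eta>)\<^sup>2"
          using \<eta> Lpos by (metis abs_le_square_iff abs_of_pos less_imp_le mult_pos_pos)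
      qed
    qed
    also have "\<dots> \<le> expectation (\<lambda>\<omega>. (Y \<omega>)\<^sup>2) / (L * \<eta>)\<^sup>2"
      by (rule integral_Markov_inequality_measure[OF intY, of "space M"]) (use \<eta> Lpos in auto)
    also have "\<dots> \<le> (L * C) / (L * \<eta>)\<^sup>2"
      by (intro divide_right_mono EY) simp
    also have "\<dots> = C / \<eta>\<^sup>2 * inverse (real L)"
      using Lpos by (simp add: field_simps power2_eq_square)
    finally show ?thesis .
  qed
  show "((\<lambda>L. measure M {\<omega> \<in> space M. \<bar>(\<Sum>l<L. X l \<omega>) / L - \<mu>\<bar> > \<eta>}) \<longlongrightarrow> 0) sequentially"
  proof (rule tendsto0_le)
    show "\<forall>\<^sub>F L in sequentially. measure M {\<omega> \<in> space M. \<bar>(\<Sum>l<L. X l \<omega>) / L - \<mu>\<bar> > \<eta>} \<le> C / \<eta>\<^sup>2 * inverse (real L)"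
      using eventually_gt_at_top[of 0] by eventually_elim (rule bound)
    show "((\<lambda>L. C / \<eta>\<^sup>2 * inverse (real L)) \<longlongrightarrow> 0) sequentially"
      using tendsto_mult[OF tendsto_const lim_inverse_n, of "C / \<eta>\<^sup>2"] by simp
  qed simp
qed


lemma upper_from_mean:
  fixes Y :: "'a \<Rightarrow> real"
  assumes [measurable]: "Y \<in> borel_measurable M"
    and nn: "\<And>\<omega>. \<omega> \<in> space M \<Longrightarrow> 0 \<le> Y \<omega>"
    and int: "integrable M Y" and E: "expectation Y = 1"
    and \<delta>: "0 < \<delta>" "\<delta> \<le> 1" and \<eta>: "0 < \<eta>"
  shows "measure M {\<omega> \<in> space M. Y \<omega> > 1 + \<eta>} \<le> (\<delta> + measure M {\<omega> \<in> space M. Y \<omega> < 1 - \<delta>}) / \<eta>"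
proof -
  define Zp where "Zp \<omega> = max (Y \<omega> - (1 - \<delta>)) 0" for \<omega>
  define Zm where "Zm \<omega> = max ((1 - \<delta>) - Y \<omega>) 0" for \<omega>
  define A where "A = {\<omega> \<in> space M. Y \<omega> < 1 - \<delta>}"
  have A[measurable]: "A \<in> sets M" unfolding A_def by measurable
  have [measurable]: "Zp \<in> borel_measurable M" unfolding Zp_def by measurable
  have iZp: "integrable M Zp" unfolding Zp_def using int by auto
  have iZm: "integrable M Zm" unfolding Zm_def using int by auto
  have iA: "integrable M (indicator A :: 'a \<Rightarrow> real)" using A by (auto intro!: integrable_real_indicator simp: emeasure_eq_measure)
  have "Zp = (\<lambda>\<omega>. (Y \<omega> - (1 - \<delta>)) + Zm \<omega>)" unfolding Zp_def Zm_def by (auto simp: max_def)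
  then have EZp: "expectation Zp = expectation Y - (1 - \<delta>) + expectation Zm"
    using int iZm by (simp add: prob_space)
  have "expectation Zm \<le> expectation (indicator A :: 'a \<Rightarrow> real)"
  proof (rule integral_mono[OF iZm iA])
    fix \<omega> assume "\<omega> \<in> space M"
    then show "Zm \<omega> \<le> indicator A \<omega>" using nn[of \<omega>] \<delta> by (auto simp: Zm_def A_def indicator_def)
  qed
  also have "\<dots> = measure M A" using A by (simp add: Int_absorb2 sets.sets_into_space)
  finally have EZm: "expectation Zm \<le> measure M A" .
  have "measure M {\<omega> \<in> space M. Y \<omega> > 1 + \<eta>} \<le> measure M {\<omega> \<in> space M. Zp \<omega> \<ge> \<eta> + \<delta>}"
    by (intro finite_measure_mono) (auto simp: Zp_def)
  also have "\<dots> \<le> expectation Zp / (\<eta> + \<delta>)"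
    by (rule integral_Markov_inequality_measure[OF iZp, of "space M"]) (use \<eta> \<delta> in \<open>auto simp: Zp_def\<close>)
  also have "\<dots> \<le> (\<delta> + measure M A) / (\<eta> + \<delta>)"
    using EZp EZm E \<eta> \<delta> by (intro divide_right_mono) auto
  also have "\<dots> \<le> (\<delta> + measure M A) / \<eta>"
    using \<eta> \<delta> by (intro divide_left_mono) auto
  finally show ?thesis unfolding A_def .
qed

lemma tendsto0_iff_ev:
  fixes f :: "nat \<Rightarrow> real"
  assumes "\<And>L. 0 \<le> f L"
  shows "(f \<longlongrightarrow> 0) sequentially \<longleftrightarrow> (\<forall>u>0. eventually (\<lambda>L. f L < u) sequentially)"
  using assms unfolding order_tendsto_iff by (auto intro: always_eventually order.strict_trans2)

lemma cip_mean_one: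
  fixes Y :: "nat \<Rightarrow> 'a \<Rightarrow> real"
  assumes [measurable]: "\<And>L. Y L \<in> borel_measurable M"
    and nn: "\<And>L \<omega>. \<omega> \<in> space M \<Longrightarrow> 0 \<le> Y L \<omega>"
    and int: "\<And>L. integrable M (Y L)"
    and E: "eventually (\<lambda>L. expectation (Y L) = 1) sequentially"
    and low: "\<And>\<delta>. \<delta> > 0 \<Longrightarrow> ((\<lambda>L. measure M {\<omega> \<in> space M. Y L \<omega> < 1 - \<delta>}) \<longlongrightarrow> 0) sequentially"
  shows "cip0 M (\<lambda>L \<omega>. \<bar>Y L \<omega> - 1\<bar>)"
  unfolding cip0_def
proof (intro conjI allI impI)
  fix L show "(\<lambda>\<omega>. \<bar>Y L \<omega> - 1\<bar>) \<in> borel_measurable M" by measurable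
next
  fix \<eta> :: real assume \<eta>: "\<eta> > 0"
  have up: "((\<lambda>L. measure M {\<omega> \<in> space M. Y L \<omega> > 1 + \<eta>}) \<longlongrightarrow> 0) sequentially"
    unfolding tendsto0_iff_ev[OF measure_nonneg]
  proof (intro allI impI)
    fix u :: real assume u: "u > 0"
    define \<delta> where "\<delta> = min 1 (u * \<eta> / 2)"
    have \<delta>: "0 < \<delta>" "\<delta> \<le> 1" "\<delta> \<le> u * \<eta> / 2" using u \<eta> by (auto simp: \<delta>_def)
    have ev: "eventually (\<lambda>L. measure M {\<omega> \<in> space M. Y L \<omega> < 1 - \<delta>} < u * \<eta> / 2) sequentially"
    proof -
      have "u * \<eta> / 2 > 0" using u \<eta> by simp
      then show ?thesis using low[OF \<delta>(1)] unfolding tendsto0_iff_ev[OF measure_nonneg] by blast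
    qed
    show "eventually (\<lambda>L. measure M {\<omega> \<in> space M. Y L \<omega> > 1 + \<eta>} < u) sequentially"
      using ev E
    proof eventually_elim
      case (elim L)
      have "measure M {\<omega> \<in> space M. Y L \<omega> > 1 + \<eta>} \<le> (\<delta> + measure M {\<omega> \<in> space M. Y L \<omega> < 1 - \<delta>}) / \<eta>"
        by (rule upper_from_mean) (use nn int elim \<delta> \<eta> in auto)
      also have "\<dots> < (u * \<eta> / 2 + u * \<eta> / 2) / \<eta>"
        using elim \<delta> \<eta> by (intro divide_strict_right_mono) (auto simp: mult.commute)
      also have "\<dots> = u" using \<eta> by simp
      finally show ?case .
    qed
  qed
  show "((\<lambda>L. measure M {\<omega> \<in> space M. \<bar>Y L \<omega> - 1\<bar> > \<eta>}) \<longlongrightarrow> 0) sequentially"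
  proof (rule tendsto0_le)
    show "\<forall>\<^sub>F L in sequentially. measure M {\<omega> \<in> space M. \<bar>Y L \<omega> - 1\<bar> > \<eta>}
       \<le> measure M {\<omega> \<in> space M. Y L \<omega> > 1 + \<eta>} + measure M {\<omega> \<in> space M. Y L \<omega> < 1 - \<eta>}"
    proof (intro always_eventually allI)
      fix L
      have "measure M {\<omega> \<in> space M. \<bar>Y L \<omega> - 1\<bar> > \<eta>}
          \<le> measure M ({\<omega> \<in> space M. Y L \<omega> > 1 + \<eta>} \<union> {\<omega> \<in> space M. Y L \<omega> < 1 - \<eta>})"
        by (intro finite_measure_mono) auto
      also have "\<dots> \<le> measure M {\<omega> \<in> space M. Y L \<omega> > 1 + \<eta>} + measure M {\<omega> \<in> space M. Y L \<omega> < 1 - \<eta>}"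
        by (intro measure_Un_le) auto
      finally show "measure M {\<omega> \<in> space M. \<bar>Y L \<omega> - 1\<bar> > \<eta>}
       \<le> measure M {\<omega> \<in> space M. Y L \<omega> > 1 + \<eta>} + measure M {\<omega> \<in> space M. Y L \<omega> < 1 - \<eta>}" .
    qed
    show "((\<lambda>L. measure M {\<omega> \<in> space M. Y L \<omega> > 1 + \<eta>} + measure M {\<omega> \<in> space M. Y L \<omega> < 1 - \<eta>}) \<longlongrightarrow> 0) sequentially"
      using tendsto_add[OF up low[OF \<eta>]] by simp
  qed simp
qed


lemma cmod_le_Re_Im: "cmod z \<le> \<bar>Re z\<bar> + \<bar>Im z\<bar>"
  using cmod_le by blast

lemma lln_complex:
  fixes Z :: "nat \<Rightarrow> 'a \<Rightarrow> complex"
  assumes mZ[measurable]: "\<And>l. Z l \<in> borel_measurable M"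
    and sq: "\<And>l. integrable M (\<lambda>\<omega>. (cmod (Z l \<omega>))\<^sup>2)"
    and var: "\<And>l. expectation (\<lambda>\<omega>. (cmod (Z l \<omega>))\<^sup>2) \<le> C"
    and iZ: "\<And>l. integrable M (Z l)" and mean: "\<And>l. expectation (Z l) = \<mu>"
    and ind: "\<And>l k. l \<noteq> k \<Longrightarrow> indep_var borel (Z l) borel (Z k)"
  shows "cip0 M (\<lambda>L \<omega>. cmod ((\<Sum>l<L. Z l \<omega>) / L - \<mu>))"
proof -
  have comp: "\<And>l. integrable M (\<lambda>\<omega>. (f (Z l \<omega>))\<^sup>2) \<and> expectation (\<lambda>\<omega>. (f (Z l \<omega>))\<^sup>2) \<le> C"
    if f: "\<And>z. \<bar>f z\<bar> \<le> cmod z" and [measurable]: "f \<in> borel_measurable borel" for f :: "complex \<Rightarrow> real"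
  proof -
    fix l
    have b: "(f (Z l \<omega>))\<^sup>2 \<le> (cmod (Z l \<omega>))\<^sup>2" for \<omega>
      using f[of "Z l \<omega>"] by (metis abs_le_square_iff abs_norm_cancel)
    have i: "integrable M (\<lambda>\<omega>. (f (Z l \<omega>))\<^sup>2)"
      by (rule Bochner_Integration.integrable_bound[OF sq[of l]]) (use b in auto)
    have "expectation (\<lambda>\<omega>. (f (Z l \<omega>))\<^sup>2) \<le> expectation (\<lambda>\<omega>. (cmod (Z l \<omega>))\<^sup>2)"
      by (rule integral_mono[OF i sq]) (rule b)
    with var[of l] i show "integrable M (\<lambda>\<omega>. (f (Z l \<omega>))\<^sup>2) \<and> expectation (\<lambda>\<omega>. (f (Z l \<omega>))\<^sup>2) \<le> C" by simp
  qed
  have cRe: "integrable M (\<lambda>\<omega>. (Re (Z l \<omega>))\<^sup>2) \<and> expectation (\<lambda>\<omega>. (Re (Z l \<omega>))\<^sup>2) \<le> C" for l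
    by (rule comp) (auto simp: abs_Re_le_cmod)
  have cIm: "integrable M (\<lambda>\<omega>. (Im (Z l \<omega>))\<^sup>2) \<and> expectation (\<lambda>\<omega>. (Im (Z l \<omega>))\<^sup>2) \<le> C" for l
    by (rule comp) (auto simp: abs_Im_le_cmod)
  have lRe: "cip0 M (\<lambda>L \<omega>. \<bar>(\<Sum>l<L. Re (Z l \<omega>)) / L - Re \<mu>\<bar>)"
  proof (rule lln)
    show "expectation (\<lambda>\<omega>. Re (Z l \<omega>)) = Re \<mu>" for l using iZ mean by simp
    show "indep_var borel (\<lambda>\<omega>. Re (Z l \<omega>)) borel (\<lambda>\<omega>. Re (Z k \<omega>))" if "l \<noteq> k" for l k
      using indep_var_compose[OF ind[OF that], of Re borel Re borel] by (simp add: o_def)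
  qed (use cRe in auto)
  have lIm: "cip0 M (\<lambda>L \<omega>. \<bar>(\<Sum>l<L. Im (Z l \<omega>)) / L - Im \<mu>\<bar>)"
  proof (rule lln)
    show "expectation (\<lambda>\<omega>. Im (Z l \<omega>)) = Im \<mu>" for l using iZ mean by simp
    show "indep_var borel (\<lambda>\<omega>. Im (Z l \<omega>)) borel (\<lambda>\<omega>. Im (Z k \<omega>))" if "l \<noteq> k" for l k
      using indep_var_compose[OF ind[OF that], of Im borel Im borel] by (simp add: o_def)
  qed (use cIm in auto)
  show ?thesis
  proof (rule cip0_mono[OF cip0_add[OF lRe lIm]])
    fix L show "(\<lambda>\<omega>. cmod ((\<Sum>l<L. Z l \<omega>) / L - \<mu>)) \<in> borel_measurable M" by measurable
    fix \<omega>
    have "Re ((\<Sum>l<L. Z l \<omega>) / L - \<mu>) = (\<Sum>l<L. Re (Z l \<omega>)) / L - Re \<mu>"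
      "Im ((\<Sum>l<L. Z l \<omega>) / L - \<mu>) = (\<Sum>l<L. Im (Z l \<omega>)) / L - Im \<mu>"
      by (simp_all add: Re_sum Im_sum)
    then show "cmod ((\<Sum>l<L. Z l \<omega>) / L - \<mu>) \<le> \<bar>(\<Sum>l<L. Re (Z l \<omega>)) / L - Re \<mu>\<bar> + \<bar>(\<Sum>l<L. Im (Z l \<omega>)) / L - Im \<mu>\<bar>"
      using cmod_le_Re_Im[of "(\<Sum>l<L. Z l \<omega>) / L - \<mu>"] by simp
  qed
qed

end


locale model = prob_space M for M :: "'a measure" +
  fixes hdf :: "nat \<Rightarrow> nat \<Rightarrow> 'a \<Rightarrow> complex" and K :: real
  assumes meas[measurable]: "\<And>n l. hdf n l \<in> borel_measurable M"
    and indep: "indep_vars (\<lambda>_. borel) (\<lambda>(n, l). hdf n l) UNIV"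
    and ident: "\<And>n l. distr M borel (hdf n l) = distr M borel (hdf 0 0)"
    and zero_mean: "\<And>n l. integrable M (hdf n l) \<and> integral\<^sup>L M (hdf n l) = 0"
    and unit_power: "\<And>n l. integrable M (\<lambda>\<omega>. (cmod (hdf n l \<omega>))\<^sup>2)
                         \<and> integral\<^sup>L M (\<lambda>\<omega>. (cmod (hdf n l \<omega>))\<^sup>2) = 1"
    and K: "K \<ge> 0"
begin

lemma indep_two_blocks:
  assumes AB: "A \<inter> B = {}" and [measurable]: "F \<in> borel_measurable (PiM A (\<lambda>_. borel))" "G \<in> borel_measurable (PiM B (\<lambda>_. borel))"
  shows "indep_var borel (\<lambda>\<omega>. F (\<lambda>i\<in>A. hdf (fst i) (snd i) \<omega>)) borel (\<lambda>\<omega>. G (\<lambda>i\<in>B. hdf (fst i) (snd i) \<omega>))"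
proof -
  have "indep_var (PiM A (\<lambda>_. borel)) (\<lambda>\<omega>. restrict (\<lambda>i. (\<lambda>(n, l). hdf n l) i \<omega>) A)
                  (PiM B (\<lambda>_. borel)) (\<lambda>\<omega>. restrict (\<lambda>i. (\<lambda>(n, l). hdf n l) i \<omega>) B)"
    by (rule indep_var_restrict[OF indep AB]) auto
  from indep_var_compose[OF this assms(2,3)] show ?thesis
    by (simp add: o_def split_beta)
qed

lemma indep_single:
  assumes "(n, l) \<noteq> (n', l')" and [measurable]: "f \<in> borel_measurable borel" "g \<in> borel_measurable borel"
  shows "indep_var borel (\<lambda>\<omega>. f (hdf n l \<omega>)) borel (\<lambda>\<omega>. g (hdf n' l' \<omega>))"
proof -
  have "indep_var borel (\<lambda>\<omega>. (\<lambda>x. f (x (n,l))) (\<lambda>i\<in>{(n,l)}. hdf (fst i) (snd i) \<omega>))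
                  borel (\<lambda>\<omega>. (\<lambda>x. g (x (n',l'))) (\<lambda>i\<in>{(n',l')}. hdf (fst i) (snd i) \<omega>))"
    by (rule indep_two_blocks) (use assms in auto)
  then show ?thesis by simp
qed

lemma indep_pairs:
  assumes "l \<noteq> k" "n \<noteq> n'" and [measurable]: "(\<lambda>x. F (fst x) (snd x)) \<in> borel_measurable (borel \<Otimes>\<^sub>M borel)"
  shows "indep_var borel (\<lambda>\<omega>. F (hdf n l \<omega>) (hdf n' l \<omega>)) borel (\<lambda>\<omega>. F (hdf n k \<omega>) (hdf n' k \<omega>))"
proof -
  have m: "(\<lambda>x. F (x (a,b)) (x (a',b))) \<in> borel_measurable (PiM {(a,b),(a',b)} (\<lambda>_. borel))" for a a' b
  proof -
    have "(\<lambda>x. (x (a,b), x (a',b))) \<in> measurable (PiM {(a,b),(a',b)} (\<lambda>_. borel)) (borel \<Otimes>\<^sub>M borel)"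
      by measurable
    from measurable_comp[OF this assms(3)] show ?thesis by (simp add: o_def)
  qed
  have "indep_var borel (\<lambda>\<omega>. (\<lambda>x. F (x (n,l)) (x (n',l))) (\<lambda>i\<in>{(n,l),(n',l)}. hdf (fst i) (snd i) \<omega>))
                  borel (\<lambda>\<omega>. (\<lambda>x. F (x (n,k)) (x (n',k))) (\<lambda>i\<in>{(n,k),(n',k)}. hdf (fst i) (snd i) \<omega>))"
    by (rule indep_two_blocks) (use assms m in auto)
  then show ?thesis by simp
qed


definition "mK = sqrt (K / (K + 1))"
definition "cK = 1 / sqrt (K + 1)"

lemma mc_sq: "mK\<^sup>2 + cK\<^sup>2 = 1" "mK\<^sup>2 = K / (K + 1)" "cK\<^sup>2 = 1 / (K + 1)"
  using K by (auto simp: mK_def cK_def power_divide field_simps)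

lemma ricean_eq: "ricean K x = complex_of_real mK + complex_of_real cK * x"
  by (simp add: ricean_def mK_def cK_def)

lemma ricean_norm2: "(cmod (ricean K x))\<^sup>2 = mK\<^sup>2 + 2 * mK * cK * Re x + cK\<^sup>2 * (cmod x)\<^sup>2"
  unfolding ricean_eq cmod_power2 by (simp add: power2_eq_square algebra_simps)

lemma ricean_meas[measurable]: "ricean K \<in> borel_measurable borel"
  unfolding ricean_def by measurable

lemma ricean_cont: "continuous_on UNIV (ricean K)"
  unfolding ricean_def by (intro continuous_intros)

lemma cnj_ricean_meas[measurable]: "(\<lambda>x. cnj (ricean K x)) \<in> borel_measurable borel"
  by (intro borel_measurable_continuous_onI continuous_intros continuous_on_compose2[OF continuous_on_cnj ricean_cont]) auto

lemma pair_meas[measurable]: "(\<lambda>x. ricean K (fst x) * cnj (ricean K (snd x))) \<in> borel_measurable (borel \<Otimes>\<^sub>M borel)"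
  by measurable

abbreviation "h n l \<omega> \<equiv> ricean K (hdf n l \<omega>)"

lemma int_w: "integrable M (hdf n l)" using zero_mean by blast
lemma E_w: "expectation (hdf n l) = 0" using zero_mean by blast
lemma int_w2: "integrable M (\<lambda>\<omega>. (cmod (hdf n l \<omega>))\<^sup>2)" using unit_power by blast
lemma E_w2: "expectation (\<lambda>\<omega>. (cmod (hdf n l \<omega>))\<^sup>2) = 1" using unit_power by blast

lemma int_h: "integrable M (h n l)"
  unfolding ricean_eq using int_w by auto

lemma E_h: "expectation (h n l) = mK"
  unfolding ricean_eq using int_w E_w by (simp add: prob_space)

lemma int_h2: "integrable M (\<lambda>\<omega>. (cmod (h n l \<omega>))\<^sup>2)"
  unfolding ricean_norm2 using int_w int_w2 by auto

lemma E_h2: "expectation (\<lambda>\<omega>. (cmod (h n l \<omega>))\<^sup>2) = 1"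
proof -
  have "expectation (\<lambda>\<omega>. (cmod (h n l \<omega>))\<^sup>2) = mK\<^sup>2 + 2 * mK * cK * Re (expectation (hdf n l)) + cK\<^sup>2 * 1"
    unfolding ricean_norm2 using int_w int_w2 E_w2 by (simp add: prob_space)
  then show ?thesis using E_w mc_sq by simp
qed


lemma cipU: "cip0 M (\<lambda>L \<omega>. cmod ((\<Sum>l<L. h n l \<omega>) / L - mK))"
proof (rule lln_complex)
  show "integrable M (\<lambda>\<omega>. (cmod (h n l \<omega>))\<^sup>2)" for l by (rule int_h2)
  show "expectation (\<lambda>\<omega>. (cmod (h n l \<omega>))\<^sup>2) \<le> 1" for l by (simp add: E_h2)
  show "integrable M (h n l)" for l by (rule int_h)
  show "expectation (h n l) = mK" for l by (rule E_h)
  show "indep_var borel (h n l) borel (h n k)" if "l \<noteq> k" for l k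
    using indep_single[of n l n k "ricean K" "ricean K"] that by simp
qed simp

lemma prod_facts:
  assumes "(n, l) \<noteq> (j, l')"
  shows "integrable M (\<lambda>\<omega>. h n l \<omega> * cnj (h j l' \<omega>))"
    and "expectation (\<lambda>\<omega>. h n l \<omega> * cnj (h j l' \<omega>)) = mK\<^sup>2"
    and "integrable M (\<lambda>\<omega>. (cmod (h n l \<omega> * cnj (h j l' \<omega>)))\<^sup>2)"
    and "expectation (\<lambda>\<omega>. (cmod (h n l \<omega> * cnj (h j l' \<omega>)))\<^sup>2) = 1"
proof -
  have ind: "indep_var borel (h n l) borel (\<lambda>\<omega>. cnj (h j l' \<omega>))"
    using indep_single[OF assms, of "ricean K" "\<lambda>x. cnj (ricean K x)"] by simp
  have ic: "integrable M (\<lambda>\<omega>. cnj (h j l' \<omega>))" using int_h by auto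
  show "integrable M (\<lambda>\<omega>. h n l \<omega> * cnj (h j l' \<omega>))"
    by (rule indep_var_integrable[OF ind int_h ic])
  show "expectation (\<lambda>\<omega>. h n l \<omega> * cnj (h j l' \<omega>)) = mK\<^sup>2"
    using indep_var_lebesgue_integral[OF ind int_h ic] E_h by (simp add: power2_eq_square)
  have ind2: "indep_var borel (\<lambda>\<omega>. (cmod (h n l \<omega>))\<^sup>2) borel (\<lambda>\<omega>. (cmod (h j l' \<omega>))\<^sup>2)"
    using indep_single[OF assms, of "\<lambda>x. (cmod (ricean K x))\<^sup>2" "\<lambda>x. (cmod (ricean K x))\<^sup>2"] by simp
  have eq: "(\<lambda>\<omega>. (cmod (h n l \<omega> * cnj (h j l' \<omega>)))\<^sup>2) = (\<lambda>\<omega>. (cmod (h n l \<omega>))\<^sup>2 * (cmod (h j l' \<omega>))\<^sup>2)"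
    by (simp add: norm_mult power_mult_distrib)
  show "integrable M (\<lambda>\<omega>. (cmod (h n l \<omega> * cnj (h j l' \<omega>)))\<^sup>2)"
    unfolding eq by (rule indep_var_integrable[OF ind2 int_h2 int_h2])
  show "expectation (\<lambda>\<omega>. (cmod (h n l \<omega> * cnj (h j l' \<omega>)))\<^sup>2) = 1"
    unfolding eq using indep_var_lebesgue_integral[OF ind2 int_h2 int_h2] E_h2 by simp
qed

lemma cipS_off:
  assumes "n \<noteq> j"
  shows "cip0 M (\<lambda>L \<omega>. cmod ((\<Sum>l<L. h n l \<omega> * cnj (h j l \<omega>)) / L - mK\<^sup>2))"
proof (rule lln_complex)
  show "integrable M (\<lambda>\<omega>. (cmod (h n l \<omega> * cnj (h j l \<omega>)))\<^sup>2)" for l using prod_facts assms by auto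
  show "expectation (\<lambda>\<omega>. (cmod (h n l \<omega> * cnj (h j l \<omega>)))\<^sup>2) \<le> 1" for l using prod_facts assms by auto
  show "integrable M (\<lambda>\<omega>. h n l \<omega> * cnj (h j l \<omega>))" for l using prod_facts assms by auto
  show "expectation (\<lambda>\<omega>. h n l \<omega> * cnj (h j l \<omega>)) = mK\<^sup>2" for l using prod_facts assms by auto
  show "indep_var borel (\<lambda>\<omega>. h n l \<omega> * cnj (h j l \<omega>)) borel (\<lambda>\<omega>. h n k \<omega> * cnj (h j k \<omega>))" if "l \<noteq> k" for l k
    using indep_pairs[OF that assms, of "\<lambda>a b. ricean K a * cnj (ricean K b)"] by simp
qed simp


definition "muT T = expectation (\<lambda>\<omega>. min ((cmod (h 0 0 \<omega>))\<^sup>2) T)"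

lemma E_trunc: "expectation (\<lambda>\<omega>. min ((cmod (h n l \<omega>))\<^sup>2) T) = muT T"
proof -
  have "expectation (\<lambda>\<omega>. min ((cmod (h n l \<omega>))\<^sup>2) T) = integral\<^sup>L (distr M borel (hdf n l)) (\<lambda>x. min ((cmod (ricean K x))\<^sup>2) T)"
    by (subst integral_distr) auto
  also have "\<dots> = integral\<^sup>L (distr M borel (hdf 0 0)) (\<lambda>x. min ((cmod (ricean K x))\<^sup>2) T)"
    by (simp only: ident[of n l])
  also have "\<dots> = muT T" unfolding muT_def by (subst integral_distr) auto
  finally show ?thesis .
qed

lemma muT_lim: "(\<lambda>i. muT (real i)) \<longlonglongrightarrow> 1"
proof -
  have "(\<lambda>i. expectation (\<lambda>\<omega>. min ((cmod (h 0 0 \<omega>))\<^sup>2) (real i))) \<longlonglongrightarrow> expectation (\<lambda>\<omega>. (cmod (h 0 0 \<omega>))\<^sup>2)"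
  proof (rule integral_dominated_convergence[where w = "\<lambda>\<omega>. (cmod (h 0 0 \<omega>))\<^sup>2"])
    show "integrable M (\<lambda>\<omega>. (cmod (h 0 0 \<omega>))\<^sup>2)" by (rule int_h2)
    show "AE \<omega> in M. (\<lambda>i. min ((cmod (h 0 0 \<omega>))\<^sup>2) (real i)) \<longlonglongrightarrow> (cmod (h 0 0 \<omega>))\<^sup>2"
    proof (rule AE_I2)
      fix \<omega>
      obtain i0 :: nat where "(cmod (h 0 0 \<omega>))\<^sup>2 \<le> real i0" using real_arch_simple by blast
      then have "\<forall>\<^sub>F i in sequentially. min ((cmod (h 0 0 \<omega>))\<^sup>2) (real i) = (cmod (h 0 0 \<omega>))\<^sup>2"
        unfolding eventually_sequentially by (intro exI[of _ i0]) auto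
      then show "(\<lambda>i. min ((cmod (h 0 0 \<omega>))\<^sup>2) (real i)) \<longlonglongrightarrow> (cmod (h 0 0 \<omega>))\<^sup>2"
        by (rule tendsto_eventually)
    qed
    show "AE \<omega> in M. norm (min ((cmod (h 0 0 \<omega>))\<^sup>2) (real i)) \<le> (cmod (h 0 0 \<omega>))\<^sup>2" for i
      by auto
  qed auto
  then show ?thesis using E_h2 by (simp add: muT_def)
qed

lemma muT_big: assumes "\<delta> > 0" shows "\<exists>T>0. muT T > 1 - \<delta>"
proof -
  have "eventually (\<lambda>i. muT (real i) > 1 - \<delta>) sequentially"
    using muT_lim assms by (intro order_tendstoD(1)) auto
  then obtain i where "muT (real i) > 1 - \<delta>" "i \<ge> 1"
    using eventually_ge_at_top[of 1] by (metis (mono_tags, lifting) eventually_at_top_linorder le_eq_less_or_eq nle_le)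
  then show ?thesis by (intro exI[of _ "real i"]) auto
qed

lemma cip_trunc:
  assumes T: "T > 0"
  shows "cip0 M (\<lambda>L \<omega>. \<bar>(\<Sum>l<L. min ((cmod (h n l \<omega>))\<^sup>2) T) / L - muT T\<bar>)"
proof (rule lln)
  have b: "norm ((min ((cmod (h n l \<omega>))\<^sup>2) T)\<^sup>2) \<le> norm (T\<^sup>2)" for l \<omega>
    using T by (auto simp: min_def abs_le_square_iff power_mono)
  show "integrable M (\<lambda>\<omega>. (min ((cmod (h n l \<omega>))\<^sup>2) T)\<^sup>2)" for l
    by (rule Bochner_Integration.integrable_bound[of _ "\<lambda>_. T\<^sup>2"]) (use b in auto)
  show "expectation (\<lambda>\<omega>. (min ((cmod (h n l \<omega>))\<^sup>2) T)\<^sup>2) \<le> T\<^sup>2" for l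
  proof -
    have "expectation (\<lambda>\<omega>. (min ((cmod (h n l \<omega>))\<^sup>2) T)\<^sup>2) \<le> expectation (\<lambda>\<omega>. T\<^sup>2)"
      by (rule integral_mono) (use b in \<open>auto intro: Bochner_Integration.integrable_bound[of _ "\<lambda>_. T\<^sup>2"]\<close>)
    then show ?thesis by (simp add: prob_space)
  qed
  show "expectation (\<lambda>\<omega>. min ((cmod (h n l \<omega>))\<^sup>2) T) = muT T" for l by (rule E_trunc)
  show "indep_var borel (\<lambda>\<omega>. min ((cmod (h n l \<omega>))\<^sup>2) T) borel (\<lambda>\<omega>. min ((cmod (h n k \<omega>))\<^sup>2) T)" if "l \<noteq> k" for l k
    using indep_single[of n l n k "\<lambda>x. min ((cmod (ricean K x))\<^sup>2) T" "\<lambda>x. min ((cmod (ricean K x))\<^sup>2) T"] that by simp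
qed simp

lemma cipS_diag: "cip0 M (\<lambda>L \<omega>. \<bar>(\<Sum>l<L. (cmod (h n l \<omega>))\<^sup>2) / L - 1\<bar>)"
proof (rule cip_mean_one)
  fix L
  show "integrable M (\<lambda>\<omega>. (\<Sum>l<L. (cmod (h n l \<omega>))\<^sup>2) / L)" using int_h2 by auto
next
  show "\<forall>\<^sub>F L in sequentially. expectation (\<lambda>\<omega>. (\<Sum>l<L. (cmod (h n l \<omega>))\<^sup>2) / L) = 1"
    using eventually_gt_at_top[of 0]
  proof eventually_elim
    case (elim L)
    then show ?case using int_h2 E_h2 by (simp add: Bochner_Integration.integral_sum)
  qed
next
  fix \<delta> :: real assume \<delta>: "\<delta> > 0"
  obtain T where T: "T > 0" "muT T > 1 - \<delta> / 2" using muT_big[of "\<delta> / 2"] \<delta> by auto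
  have c: "cip0 M (\<lambda>L \<omega>. \<bar>(\<Sum>l<L. min ((cmod (h n l \<omega>))\<^sup>2) T) / L - muT T\<bar>)" by (rule cip_trunc[OF T(1)])
  have [measurable]: "(\<lambda>\<omega>. \<bar>(\<Sum>l<L. min ((cmod (h n l \<omega>))\<^sup>2) T) / L - muT T\<bar>) \<in> borel_measurable M" for L
    by measurable
  show "(\<lambda>L. prob {\<omega> \<in> space M. (\<Sum>l<L. (cmod (h n l \<omega>))\<^sup>2) / L < 1 - \<delta>}) \<longlonglongrightarrow> 0"
  proof (rule tendsto0_le)
    show "\<forall>\<^sub>F L in sequentially. prob {\<omega> \<in> space M. (\<Sum>l<L. (cmod (h n l \<omega>))\<^sup>2) / L < 1 - \<delta>}
       \<le> prob {\<omega> \<in> space M. \<bar>(\<Sum>l<L. min ((cmod (h n l \<omega>))\<^sup>2) T) / L - muT T\<bar> > \<delta> / 2}"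
    proof (intro always_eventually allI finite_measure_mono)
      fix L
      show "{\<omega> \<in> space M. \<bar>(\<Sum>l<L. min ((cmod (h n l \<omega>))\<^sup>2) T) / L - muT T\<bar> > \<delta> / 2} \<in> events" by measurable
      show "{\<omega> \<in> space M. (\<Sum>l<L. (cmod (h n l \<omega>))\<^sup>2) / L < 1 - \<delta>}
        \<subseteq> {\<omega> \<in> space M. \<bar>(\<Sum>l<L. min ((cmod (h n l \<omega>))\<^sup>2) T) / L - muT T\<bar> > \<delta> / 2}"
      proof safe
        fix \<omega> assume "\<omega> \<in> space M" and lt: "(\<Sum>l<L. (cmod (h n l \<omega>))\<^sup>2) / L < 1 - \<delta>"
        have "(\<Sum>l<L. min ((cmod (h n l \<omega>))\<^sup>2) T) \<le> (\<Sum>l<L. (cmod (h n l \<omega>))\<^sup>2)"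
          by (intro sum_mono) auto
        then have "(\<Sum>l<L. min ((cmod (h n l \<omega>))\<^sup>2) T) / L \<le> (\<Sum>l<L. (cmod (h n l \<omega>))\<^sup>2) / L"
          by (intro divide_right_mono) auto
        with lt T show "\<bar>(\<Sum>l<L. min ((cmod (h n l \<omega>))\<^sup>2) T) / L - muT T\<bar> > \<delta> / 2" by linarith
      qed
    qed
    show "(\<lambda>L. prob {\<omega> \<in> space M. \<bar>(\<Sum>l<L. min ((cmod (h n l \<omega>))\<^sup>2) T) / L - muT T\<bar> > \<delta> / 2}) \<longlonglongrightarrow> 0"
      using c \<delta> unfolding cip0_def by (meson half_gt_zero)
  qed simp
qed (auto intro!: sum_nonneg divide_nonneg_nonneg)

end


context model begin

lemma cipS: "cip0 M (\<lambda>L \<omega>. cmod ((\<Sum>l<L. h n l \<omega> * cnj (h j l \<omega>)) / L - (mK\<^sup>2 + (if n = j then cK\<^sup>2 else 0))))"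
proof (cases "n = j")
  case False then show ?thesis using cipS_off[OF False] by simp
next
  case True
  show ?thesis
  proof (rule cip0_mono[OF cipS_diag[of n]])
    fix L show "(\<lambda>\<omega>. cmod ((\<Sum>l<L. h n l \<omega> * cnj (h j l \<omega>)) / L - (mK\<^sup>2 + (if n = j then cK\<^sup>2 else 0)))) \<in> borel_measurable M"
      by measurable
    fix \<omega>
    have "(\<Sum>l<L. h n l \<omega> * cnj (h j l \<omega>)) / L - (mK\<^sup>2 + (if n = j then cK\<^sup>2 else 0))
        = complex_of_real ((\<Sum>l<L. (cmod (h n l \<omega>))\<^sup>2) / L - 1)"
      using True mc_sq(1) by (simp add: complex_norm_square del: of_real_power)
    then show "cmod ((\<Sum>l<L. h n l \<omega> * cnj (h j l \<omega>)) / L - (mK\<^sup>2 + (if n = j then cK\<^sup>2 else 0)))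
       \<le> \<bar>(\<Sum>l<L. (cmod (h n l \<omega>))\<^sup>2) / L - 1\<bar>" by (simp only: norm_of_real order_refl)
  qed
qed


lemma main_bound:
  fixes P s1 s2 \<theta> \<mu> \<alpha> \<gamma> \<beta> \<Delta> :: real and N L :: nat and \<omega>
  assumes P: "P > 0" and s1: "s1 > 0" and s2: "s2 > 0" and L: "L > 0"
  defines "\<mu> \<equiv> sqrt P * mK" and "\<alpha> \<equiv> s1 * P * mK\<^sup>2" and "\<gamma> \<equiv> s1 * P * cK\<^sup>2 + s2"
  defines "\<beta> \<equiv> \<mu> / (\<alpha> * N + \<gamma>)"
  defines "\<Delta> \<equiv> sqrt P * (\<Sum>n<N. cmod ((\<Sum>l<L. h n l \<omega>) / L - mK))
     + s1 * P * (\<Sum>n<N. \<Sum>j<N. cmod ((\<Sum>l<L. h n l \<omega> * cnj (h j l \<omega>)) / L - (mK\<^sup>2 + (if n = j then cK\<^sup>2 else 0))))"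
  shows "\<bar>exp_stat \<theta> s1 s2 L (Hmat N L K (\<lambda>n l. hdf n l \<omega>)) (alpha_nocsis P L) - \<theta>\<^sup>2 / 8 * (\<mu> * \<beta> * N)\<bar>
     \<le> \<theta>\<^sup>2 / 8 * (\<Delta> * \<bar>\<beta>\<bar> + (N * \<bar>\<mu>\<bar> + \<Delta>) * ((1 + \<bar>\<beta>\<bar>) * \<Delta>) / s2)"
proof -
  define f where "f n l = hdf n l \<omega>" for n l
  define u where "u n = complex_of_real (sqrt P / L) * (\<Sum>l\<in>{0..<L}. ricean K (f n l))" for n
  obtain Z where Z: "\<And>n. n < N \<Longrightarrow> (\<Sum>j\<in>{0..<N}. Rf s1 s2 (P / L) L (\<lambda>n l. ricean K (f n l)) n j * Z j) = u n"
    and q: "quad_stat s1 s2 (Hmat N L K f) (alpha_nocsis P L) / L = Re (\<Sum>n\<in>{0..<N}. cnj (u n) * Z n)"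
    using link[OF L, of P s1 s2 N K f] P s1 s2 unfolding u_def by auto
  have Lr: "real L > 0" using L by simp
  have D: "\<alpha> * N + \<gamma> > 0" unfolding \<alpha>_def \<gamma>_def using P s1 s2 by (intro add_nonneg_pos) auto
  have beta: "(\<alpha> * N + \<gamma>) * \<beta> = \<mu>" unfolding \<beta>_def using D by simp
  have ueq: "cmod (u n - \<mu>) = sqrt P * cmod ((\<Sum>l<L. h n l \<omega>) / L - mK)" for n
  proof -
    have "u n - \<mu> = complex_of_real (sqrt P) * ((\<Sum>l<L. h n l \<omega>) / L - mK)"
      unfolding u_def \<mu>_def f_def using Lr by (simp add: atLeast0LessThan field_simps)
    then show ?thesis using P by (simp add: norm_mult)
  qed
  have Req: "cmod (Rf s1 s2 (P / L) L (\<lambda>n l. ricean K (f n l)) n j - (\<alpha> + (if n = j then \<gamma> else 0)))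
     = s1 * P * cmod ((\<Sum>l<L. h n l \<omega> * cnj (h j l \<omega>)) / L - (mK\<^sup>2 + (if n = j then cK\<^sup>2 else 0)))" for n j
  proof -
    have "Rf s1 s2 (P / L) L (\<lambda>n l. ricean K (f n l)) n j - (\<alpha> + (if n = j then \<gamma> else 0))
      = complex_of_real (s1 * P) * ((\<Sum>l<L. h n l \<omega> * cnj (h j l \<omega>)) / L - (mK\<^sup>2 + (if n = j then cK\<^sup>2 else 0)))"
      unfolding Rf_def \<alpha>_def \<gamma>_def f_def using Lr by (auto simp: atLeast0LessThan field_simps)
    then show ?thesis using s1 P by (simp add: norm_mult)
  qed
  have delta: "\<Delta> = (\<Sum>n\<in>{0..<N}. cmod (u n - \<mu>)) + (\<Sum>n\<in>{0..<N}. \<Sum>j\<in>{0..<N}. cmod (Rf s1 s2 (P / L) L (\<lambda>n l. ricean K (f n l)) n j - (\<alpha> + (if n = j then \<gamma> else 0))))"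
    unfolding \<Delta>_def ueq Req by (simp add: atLeast0LessThan sum_distrib_left)
  have cb: "\<bar>Re (\<Sum>n\<in>{0..<N}. cnj (u n) * Z n) - \<mu> * \<beta> * N\<bar> \<le> \<Delta> * \<bar>\<beta>\<bar> + (N * \<bar>\<mu>\<bar> + \<Delta>) * ((1 + \<bar>\<beta>\<bar>) * \<Delta>) / s2"
  proof (rule core_bound[OF s2 _ Z beta delta])
    fix y :: "nat \<Rightarrow> complex"
    show "s2 * (\<Sum>n\<in>{0..<N}. (cmod (y n))\<^sup>2) \<le> Re (\<Sum>n\<in>{0..<N}. cnj (y n) * (\<Sum>j\<in>{0..<N}. Rf s1 s2 (P / L) L (\<lambda>n l. ricean K (f n l)) n j * y j))"
      by (rule Rf_posdef) (use s1 P in auto)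
  qed
  define Rq where "Rq = Re (\<Sum>n\<in>{0..<N}. cnj (u n) * Z n)"
  have e: "exp_stat \<theta> s1 s2 L (Hmat N L K (\<lambda>n l. hdf n l \<omega>)) (alpha_nocsis P L) = \<theta>\<^sup>2 / 8 * Rq"
  proof -
    have "exp_stat \<theta> s1 s2 L (Hmat N L K (\<lambda>n l. hdf n l \<omega>)) (alpha_nocsis P L)
       = \<theta>\<^sup>2 / 8 * (quad_stat s1 s2 (Hmat N L K f) (alpha_nocsis P L) / L)"
      unfolding exp_stat_def f_def[abs_def] by simp
    then show ?thesis unfolding q Rq_def .
  qed
  have "\<bar>exp_stat \<theta> s1 s2 L (Hmat N L K (\<lambda>n l. hdf n l \<omega>)) (alpha_nocsis P L) - \<theta>\<^sup>2 / 8 * (\<mu> * \<beta> * N)\<bar>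
     = \<theta>\<^sup>2 / 8 * \<bar>Rq - \<mu> * \<beta> * N\<bar>"
    unfolding e right_diff_distrib[symmetric] abs_mult by simp
  also have "\<dots> \<le> \<theta>\<^sup>2 / 8 * (\<Delta> * \<bar>\<beta>\<bar> + (N * \<bar>\<mu>\<bar> + \<Delta>) * ((1 + \<bar>\<beta>\<bar>) * \<Delta>) / s2)"
    by (intro mult_left_mono) (use cb Rq_def in auto)
  finally show ?thesis .
qed


lemma main_conv:
  fixes P s1 s2 \<theta> :: real and N :: nat
  assumes P: "P > 0" and s1: "s1 > 0" and s2: "s2 > 0"
  shows "conv_in_prob M (\<lambda>L \<omega>. exp_stat \<theta> s1 s2 L (Hmat N L K (\<lambda>n l. hdf n l \<omega>)) (alpha_nocsis P L))
          (\<theta>\<^sup>2 / 8 * (P * (K / (K + 1)) * N / (s1 * P * (K / (K + 1)) * N + (s1 * P * (1 / (K + 1)) + s2))))"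
proof -
  define \<mu> where "\<mu> = sqrt P * mK"
  define \<alpha> where "\<alpha> = s1 * P * mK\<^sup>2"
  define \<gamma> where "\<gamma> = s1 * P * cK\<^sup>2 + s2"
  define \<beta> where "\<beta> = \<mu> / (\<alpha> * N + \<gamma>)"
  define \<Delta> where "\<Delta> L \<omega> = sqrt P * (\<Sum>n<N. cmod ((\<Sum>l<L. h n l \<omega>) / L - mK))
     + s1 * P * (\<Sum>n<N. \<Sum>j<N. cmod ((\<Sum>l<L. h n l \<omega> * cnj (h j l \<omega>)) / L - (mK\<^sup>2 + (if n = j then cK\<^sup>2 else 0))))" for L \<omega>
  have val: "\<mu> * \<beta> * N = P * (K / (K + 1)) * N / (s1 * P * (K / (K + 1)) * N + (s1 * P * (1 / (K + 1)) + s2))"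
    unfolding \<beta>_def \<mu>_def \<alpha>_def \<gamma>_def mc_sq(2,3)[symmetric] using P
    by (simp add: power2_eq_square algebra_simps)
  have cU: "cip0 M (\<lambda>L \<omega>. \<Sum>n\<in>{..<N}. cmod ((\<Sum>l<L. h n l \<omega>) / L - mK))"
    by (rule cip0_sum) (rule finite_lessThan, rule cipU)
  have cS1: "cip0 M (\<lambda>L \<omega>. \<Sum>j\<in>{..<N}. cmod ((\<Sum>l<L. h n l \<omega> * cnj (h j l \<omega>)) / L - (mK\<^sup>2 + (if n = j then cK\<^sup>2 else 0))))" for n
    by (rule cip0_sum) (rule finite_lessThan, rule cipS)
  have cS: "cip0 M (\<lambda>L \<omega>. \<Sum>n\<in>{..<N}. \<Sum>j\<in>{..<N}. cmod ((\<Sum>l<L. h n l \<omega> * cnj (h j l \<omega>)) / L - (mK\<^sup>2 + (if n = j then cK\<^sup>2 else 0))))"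
    by (rule cip0_sum) (rule finite_lessThan, rule cS1)
  have cD: "cip0 M \<Delta>"
    unfolding \<Delta>_def[abs_def]
    by (rule cip0_add[OF cip0_cmult[OF cU] cip0_cmult[OF cS]]) (use P s1 in auto)
  have [measurable]: "\<Delta> L \<in> borel_measurable M" for L using cD by (simp add: cip0_def)
  define Cst where "Cst = \<theta>\<^sup>2 / 8 * (\<bar>\<beta>\<bar> + (N * \<bar>\<mu>\<bar> + 1) * (1 + \<bar>\<beta>\<bar>) / s2)"
  have Cst: "Cst \<ge> 0" unfolding Cst_def using s2 by (auto intro!: mult_nonneg_nonneg add_nonneg_nonneg divide_nonneg_nonneg)
  have D0: "\<Delta> L \<omega> \<ge> 0" for L \<omega> unfolding \<Delta>_def using P s1
    by (auto intro!: add_nonneg_nonneg mult_nonneg_nonneg sum_nonneg)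
  show ?thesis
    unfolding conv_in_prob_def val[symmetric]
  proof (intro allI impI)
    fix \<epsilon> :: real assume \<epsilon>: "\<epsilon> > 0"
    define \<eta> where "\<eta> = min 1 (\<epsilon> / (Cst + 1))"
    have \<eta>: "\<eta> > 0" "\<eta> \<le> 1" "Cst * \<eta> < \<epsilon>"
    proof -
      show "\<eta> > 0" "\<eta> \<le> 1" using \<epsilon> Cst by (auto simp: \<eta>_def)
      have "Cst * \<eta> \<le> Cst * (\<epsilon> / (Cst + 1))" using Cst by (intro mult_left_mono) (auto simp: \<eta>_def)
      also have "\<dots> < \<epsilon>" using Cst \<epsilon> by (simp add: field_simps)
      finally show "Cst * \<eta> < \<epsilon>" .
    qed
    have key: "\<bar>exp_stat \<theta> s1 s2 L (Hmat N L K (\<lambda>n l. hdf n l \<omega>)) (alpha_nocsis P L) - \<theta>\<^sup>2 / 8 * (\<mu> * \<beta> * N)\<bar> < \<epsilon>"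
      if L: "L > 0" and D: "\<Delta> L \<omega> \<le> \<eta>" for L \<omega>
    proof -
      have "\<bar>exp_stat \<theta> s1 s2 L (Hmat N L K (\<lambda>n l. hdf n l \<omega>)) (alpha_nocsis P L) - \<theta>\<^sup>2 / 8 * (\<mu> * \<beta> * N)\<bar>
         \<le> \<theta>\<^sup>2 / 8 * (\<Delta> L \<omega> * \<bar>\<beta>\<bar> + (N * \<bar>\<mu>\<bar> + \<Delta> L \<omega>) * ((1 + \<bar>\<beta>\<bar>) * \<Delta> L \<omega>) / s2)"
        unfolding \<mu>_def \<beta>_def \<alpha>_def \<gamma>_def \<Delta>_def by (rule main_bound[OF P s1 s2 L])
      also have "\<dots> \<le> \<theta>\<^sup>2 / 8 * (\<eta> * \<bar>\<beta>\<bar> + (N * \<bar>\<mu>\<bar> + 1) * ((1 + \<bar>\<beta>\<bar>) * \<eta>) / s2)"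
        using D D0[of L \<omega>] \<eta> s2
        by (intro mult_left_mono add_mono mult_right_mono divide_right_mono mult_mono) auto
      also have "\<dots> = Cst * \<eta>" unfolding Cst_def by (simp add: field_simps)
      also have "\<dots> < \<epsilon>" by (rule \<eta>(3))
      finally show ?thesis .
    qed
    show "(\<lambda>L. prob {\<omega> \<in> space M. \<bar>exp_stat \<theta> s1 s2 L (Hmat N L K (\<lambda>n l. hdf n l \<omega>)) (alpha_nocsis P L) - \<theta>\<^sup>2 / 8 * (\<mu> * \<beta> * N)\<bar> > \<epsilon>}) \<longlonglongrightarrow> 0"
    proof (rule tendsto0_le)
      show "\<forall>\<^sub>F L in sequentially. prob {\<omega> \<in> space M. \<bar>exp_stat \<theta> s1 s2 L (Hmat N L K (\<lambda>n l. hdf n l \<omega>)) (alpha_nocsis P L) - \<theta>\<^sup>2 / 8 * (\<mu> * \<beta> * N)\<bar> > \<epsilon>}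
         \<le> prob {\<omega> \<in> space M. \<Delta> L \<omega> > \<eta>}"
        using eventually_gt_at_top[of 0]
      proof eventually_elim
        case (elim L)
        show ?case
        proof (rule finite_measure_mono)
          show "{\<omega> \<in> space M. \<Delta> L \<omega> > \<eta>} \<in> events" by measurable
          show "{\<omega> \<in> space M. \<bar>exp_stat \<theta> s1 s2 L (Hmat N L K (\<lambda>n l. hdf n l \<omega>)) (alpha_nocsis P L) - \<theta>\<^sup>2 / 8 * (\<mu> * \<beta> * N)\<bar> > \<epsilon>}
            \<subseteq> {\<omega> \<in> space M. \<Delta> L \<omega> > \<eta>}"
          proof safe
            fix \<omega> assume "\<omega> \<in> space M" and gt: "\<bar>exp_stat \<theta> s1 s2 L (Hmat N L K (\<lambda>n l. hdf n l \<omega>)) (alpha_nocsis P L) - \<theta>\<^sup>2 / 8 * (\<mu> * \<beta> * N)\<bar> > \<epsilon>"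
            show "\<Delta> L \<omega> > \<eta>"
            proof (rule ccontr)
              assume "\<not> \<Delta> L \<omega> > \<eta>"
              then have "\<Delta> L \<omega> \<le> \<eta>" by simp
              from key[OF elim this] gt show False by simp
            qed
          qed
        qed
      qed
      show "(\<lambda>L. prob {\<omega> \<in> space M. \<Delta> L \<omega> > \<eta>}) \<longlonglongrightarrow> 0"
        using cD \<eta>(1) unfolding cip0_def by simp
    qed simp
  qed
qed

end


theorem theorem1:
  fixes M :: "'a measure"
    and hdf :: "nat \<Rightarrow> nat \<Rightarrow> 'a \<Rightarrow> complex"
    and \<theta> p1 s_eta2 s_nu2 P_T :: real
  assumes "prob_space M"
    and meas: "\<And>n l. hdf n l \<in> borel_measurable M"
    and indep: "prob_space.indep_vars M (\<lambda>_. borel) (\<lambda>(n, l). hdf n l) UNIV"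
    and ident: "\<And>n l. distr M borel (hdf n l) = distr M borel (hdf 0 0)"
    and zero_mean: "\<And>n l. integrable M (hdf n l) \<and> integral\<^sup>L M (hdf n l) = 0"
    and unit_power: "\<And>n l. integrable M (\<lambda>\<omega>. (cmod (hdf n l \<omega>))\<^sup>2)
                         \<and> integral\<^sup>L M (\<lambda>\<omega>. (cmod (hdf n l \<omega>))\<^sup>2) = 1"
    and "\<theta> > 0" and "0 < p1" and "p1 < 1"
    and "s_eta2 > 0" and "s_nu2 > 0" and "P_T > 0"
  shows "let P = P_T / (p1 * \<theta>\<^sup>2 + s_eta2) in
    \<exists>E :: nat \<Rightarrow> real \<Rightarrow> real.
      (\<forall>N \<ge> 1. \<forall>K \<ge> 0.
         conv_in_prob M
           (\<lambda>L \<omega>. exp_stat \<theta> s_eta2 s_nu2 L (Hmat N L K (\<lambda>n l. hdf n l \<omega>)) (alpha_nocsis P L))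
           (E N K))
    \<and> (\<forall>N \<ge> 1. E N 0 = 0)
    \<and> (\<forall>N \<ge> 1. ((\<lambda>K. E N K / E 1 K) \<longlongrightarrow> real N) (at_right 0))"
proof -
  define P where "P = P_T / (p1 * \<theta>\<^sup>2 + s_eta2)"
  have P: "P > 0" unfolding P_def using assms by (intro divide_pos_pos add_nonneg_pos) auto
  define s1 where "s1 = s_eta2"
  define s2 where "s2 = s_nu2"
  have s1: "s1 > 0" and s2: "s2 > 0" using assms by (auto simp: s1_def s2_def)
  define D where "D (n::real) K = s1 * P * (K / (K + 1)) * n + (s1 * P * (1 / (K + 1)) + s2)" for n K :: real
  define E where "E N K = \<theta>\<^sup>2 / 8 * (P * (K / (K + 1)) * real N / D (real N) K)" for N :: nat and K :: real
  have conv: "conv_in_prob M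
           (\<lambda>L \<omega>. exp_stat \<theta> s_eta2 s_nu2 L (Hmat N L K (\<lambda>n l. hdf n l \<omega>)) (alpha_nocsis P L))
           (E N K)" if "K \<ge> 0" for N K
  proof -
    have "model M hdf K"
      unfolding model_def model_axioms_def using assms that by auto
    from model.main_conv[OF this P s1 s2, of \<theta> N] show ?thesis
      unfolding E_def D_def s1_def s2_def .
  qed
  have E0: "E N 0 = 0" for N unfolding E_def by simp
  have lim: "((\<lambda>K. E N K / E 1 K) \<longlongrightarrow> real N) (at_right 0)" for N
  proof -
    have Dpos: "D n 0 > 0" for n unfolding D_def using s1 s2 P by (simp add: add_pos_pos mult_pos_pos)
    have l1: "((\<lambda>K. real N * D 1 K / D (real N) K) \<longlongrightarrow> real N * D 1 0 / D (real N) 0) (at_right 0)"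
    proof -
      have "s1 * P + s2 > 0" using s1 s2 P by (intro add_pos_pos mult_pos_pos)
      then show ?thesis unfolding D_def by (intro tendsto_intros) auto
    qed
    have e: "D 1 0 = D (real N) 0" unfolding D_def by simp
    have l2: "((\<lambda>K. real N * D 1 K / D (real N) K) \<longlongrightarrow> real N) (at_right 0)"
      using l1 unfolding e using Dpos[of "real N"] by simp
    have ev: "eventually (\<lambda>K. real N * D 1 K / D (real N) K = E N K / E 1 K) (at_right 0)"
    proof -
      have "eventually (\<lambda>K::real. K > 0) (at_right 0)" by (simp add: eventually_at_right_less)
      then show ?thesis
      proof eventually_elim
        case (elim K)
        have Dp: "D n K > 0" if "n \<ge> 0" for n unfolding D_def using s1 s2 P elim that
          by (intro add_nonneg_pos mult_nonneg_nonneg) auto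
        define c where "c = \<theta>\<^sup>2 / 8 * (P * (K / (K + 1)))"
        have c: "c \<noteq> 0" unfolding c_def using elim P assms(7) by simp
        have En: "E n K = c * (real n / D (real n) K)" for n unfolding E_def c_def by (simp add: algebra_simps)
        show ?case unfolding En using c Dp[of 1] Dp[of "real N"] by (simp add: field_simps)
      qed
    qed
    show ?thesis by (rule Lim_transform_eventually[OF l2 ev])
  qed
  show ?thesis unfolding Let_def P_def[symmetric]
    by (intro exI[of _ E] conjI allI impI conv E0 lim)
qed


end
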